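(* Let $g_1,g_2\in\mathcal{O}_3=\mathbb{R}\{t,x_1,x_2\}$ vanish at the origin, suppose $V(g_1,g_2)$ is a curve having an algebraically isolated singularity at the origin and $\dim_{\mathbb{R}}\mathcal{O}_3/\langle t,g_1,g_2\rangle<\infty$. Put $g_i'(t,x)=g_i(t^2,x)$, $i=1,2$. Then $\dim_{\mathbb{R}}\mathcal{O}_3/\langle t,g_1',g_2'\rangle<\infty$ and $V(g_1',g_2')$ is a curve having an algebraically isolated singularity at the origin.
   Context: $\mathcal{O}_3$ is the ring of real analytic germs at the origin in $(t,x_1,x_2)$. For $w_1,\dots,w_m\in\mathcal{O}_3$ vanishing at $\mathbf 0$, let $W$ be the ideal generated by $w_1,\dots,w_m$ and all $2\times2$ minors of the Jacobian matrix of $(w_1,\ldots,w_m)$ with respect to $(t,x_1,x_2)$; $V(w_1,\dots,w_m)$ is a curve having an algebraically isolated singularity at the origin if $W$ is proper and $\dim_{\mathbb{R}}\mathcal{O}_3/W<\infty$. *)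

theory Defs
  imports "HOL-Analysis.Analysis"
begin

text \<open>A germ of O_3 is represented by a
function R^3 -> R that is real analytic at the origin; two functions define the same
germ iff they agree on a neighbourhood of the origin.\<close>

definition analytic_at0 :: "(real \<times> real \<times> real \<Rightarrow> real) \<Rightarrow> bool" where
  "analytic_at0 f \<longleftrightarrow>
     (\<exists>r>0. \<exists>c :: nat \<times> nat \<times> nat \<Rightarrow> real.
        \<forall>t x1 x2. \<bar>t\<bar> < r \<and> \<bar>x1\<bar> < r \<and> \<bar>x2\<bar> < r \<longrightarrow>
          ((\<lambda>(i, j, k). c (i, j, k) * t ^ i * x1 ^ j * x2 ^ k) has_sum f (t, x1, x2)) UNIV)"

definition germ_eq :: "(real \<times> real \<times> real \<Rightarrow> real) \<Rightarrow> (real \<times> real \<times> real \<Rightarrow> real) \<Rightarrow> bool" where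
  "germ_eq f g \<longleftrightarrow> (\<forall>\<^sub>F p in nhds (0, 0, 0). f p = g p)"

definition in_ideal :: "(real \<times> real \<times> real \<Rightarrow> real) list \<Rightarrow> (real \<times> real \<times> real \<Rightarrow> real) \<Rightarrow> bool" where
  "in_ideal ws h \<longleftrightarrow>
     (\<exists>a :: nat \<Rightarrow> real \<times> real \<times> real \<Rightarrow> real.
        (\<forall>i < length ws. analytic_at0 (a i)) \<and>
        germ_eq h (\<lambda>p. \<Sum>i<length ws. a i p * (ws ! i) p))"

definition proper_ideal :: "(real \<times> real \<times> real \<Rightarrow> real) list \<Rightarrow> bool" where
  "proper_ideal ws \<longleftrightarrow> \<not> in_ideal ws (\<lambda>_. 1)"

text \<open>dim_R O_3 / <ws> < infinity: the quotient is spanned by the classes of finitely many germs.\<close>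
definition finite_codim :: "(real \<times> real \<times> real \<Rightarrow> real) list \<Rightarrow> bool" where
  "finite_codim ws \<longleftrightarrow>
     (\<exists>E. finite E \<and> (\<forall>e\<in>E. analytic_at0 e) \<and>
        (\<forall>h. analytic_at0 h \<longrightarrow>
           (\<exists>u :: (real \<times> real \<times> real \<Rightarrow> real) \<Rightarrow> real.
              in_ideal ws (\<lambda>p. h p - (\<Sum>e\<in>E. u e * e p)))))"

text \<open>Partial derivative with respect to coordinate k (0 = t, 1 = x1, 2 = x2).\<close>
definition pdiff :: "nat \<Rightarrow> (real \<times> real \<times> real \<Rightarrow> real) \<Rightarrow> real \<times> real \<times> real \<Rightarrow> real" where
  "pdiff k f = (\<lambda>(t, x1, x2).
      if k = 0 then deriv (\<lambda>s. f (s, x1, x2)) t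
      else if k = 1 then deriv (\<lambda>s. f (t, s, x2)) x1
      else deriv (\<lambda>s. f (t, x1, s)) x2)"

definition jac_minors :: "(real \<times> real \<times> real \<Rightarrow> real) list \<Rightarrow> (real \<times> real \<times> real \<Rightarrow> real) list" where
  "jac_minors ws =
     [(\<lambda>p. pdiff k (ws ! i) p * pdiff l (ws ! j) p - pdiff l (ws ! i) p * pdiff k (ws ! j) p).
        i \<leftarrow> [0..<length ws], j \<leftarrow> [0..<length ws], i < j, k \<leftarrow> [0..<3], l \<leftarrow> [0..<3], k < l]"

text \<open>V(ws) is a curve with an algebraically isolated singularity at the origin:
the ideal W generated by ws and the 2x2 Jacobian minors is proper and of finite codimension.\<close>
definition curve_ais :: "(real \<times> real \<times> real \<Rightarrow> real) list \<Rightarrow> bool" where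
  "curve_ais ws \<longleftrightarrow> proper_ideal (ws @ jac_minors ws) \<and> finite_codim (ws @ jac_minors ws)"

end

theory Submission
  imports Defs "HOL-Library.Product_Plus" "HOL-Library.Product_Order"
begin

definition cube :: "real \<Rightarrow> (real \<times> real \<times> real) set" where
  "cube r = {p. \<bar>fst p\<bar> < r \<and> \<bar>fst (snd p)\<bar> < r \<and> \<bar>snd (snd p)\<bar> < r}"

lemma in_cube[simp]: "(t,x,y) \<in> cube r \<longleftrightarrow> \<bar>t\<bar> < r \<and> \<bar>x\<bar> < r \<and> \<bar>y\<bar> < r"
  by (simp add: cube_def)

lemma cube_mono: "r' \<le> r \<Longrightarrow> p \<in> cube r' \<Longrightarrow> p \<in> cube r"
  by (cases p) auto

lemma zero_in_cube: "r > 0 \<Longrightarrow> (0,0,0) \<in> cube r" by simp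

definition mn :: "nat \<times> nat \<times> nat \<Rightarrow> real \<times> real \<times> real \<Rightarrow> real" where
  "mn n p = fst p ^ fst n * fst (snd p) ^ fst (snd n) * snd (snd p) ^ snd (snd n)"

lemma mn_simp[simp]: "mn (i,j,k) (t,x,y) = t^i*x^j*y^k" by (simp add: mn_def)

definition AC :: "(nat \<times> nat \<times> nat \<Rightarrow> real) \<Rightarrow> real \<Rightarrow> bool" where
  "AC c r \<longleftrightarrow> (\<forall>p\<in>cube r. (\<lambda>n. c n * mn n p) summable_on UNIV)"

definition ev :: "(nat \<times> nat \<times> nat \<Rightarrow> real) \<Rightarrow> real \<times> real \<times> real \<Rightarrow> real" where
  "ev c p = (\<Sum>\<^sub>\<infinity>n. c n * mn n p)"

lemma AC_has_sum: "AC c r \<Longrightarrow> p \<in> cube r \<Longrightarrow> ((\<lambda>n. c n * mn n p) has_sum ev c p) UNIV"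
  unfolding AC_def ev_def by (intro has_sum_infsum) blast

lemma AC_mono: "AC c r \<Longrightarrow> r' \<le> r \<Longrightarrow> AC c r'"
  unfolding AC_def using cube_mono by blast

lemma AC_abs: "AC c r \<Longrightarrow> p \<in> cube r \<Longrightarrow> (\<lambda>n. \<bar>c n * mn n p\<bar>) summable_on UNIV"
proof -
  assume "AC c r" "p \<in> cube r"
  then have "(\<lambda>n. c n * mn n p) summable_on UNIV" unfolding AC_def by blast
  from summable_on_iff_abs_summable_on_real[THEN iffD1, OF this] show ?thesis by simp
qed

lemma eventually_cube: "(\<forall>\<^sub>F p in nhds (0,0,0). P p) \<longleftrightarrow> (\<exists>r>0. \<forall>p\<in>cube r. P p)"
proof
  assume "\<forall>\<^sub>F p in nhds (0,0,0). P p"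
  then obtain d where d: "d > 0" "\<And>p. dist p (0,0,0) < d \<Longrightarrow> P p"
    unfolding eventually_nhds_metric by blast
  show "\<exists>r>0. \<forall>p\<in>cube r. P p"
  proof (intro exI[of _ "d/3"] conjI ballI)
    fix p assume p: "p \<in> cube (d/3)"
    obtain t x y where pe: "p = (t,x,y)" by (cases p) auto
    define D where "D = dist (x,y) (0,0)"
    have e1: "dist p (0,0,0) = sqrt (t\<^sup>2 + D\<^sup>2)"
      unfolding D_def pe dist_Pair_Pair by (simp add: dist_real_def)
    have e2: "sqrt (t\<^sup>2 + D\<^sup>2) \<le> \<bar>t\<bar> + \<bar>D\<bar>"
      by (rule sqrt_sum_squares_le_sum_abs)
    have e3: "D = sqrt (x\<^sup>2 + y\<^sup>2)" unfolding D_def dist_Pair_Pair by (simp add: dist_real_def)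
    have e4: "sqrt (x\<^sup>2 + y\<^sup>2) \<le> \<bar>x\<bar> + \<bar>y\<bar>"
      by (rule sqrt_sum_squares_le_sum_abs)
    have e5: "\<bar>D\<bar> = D" unfolding D_def by simp
    have "dist p (0,0,0) \<le> \<bar>t\<bar> + (\<bar>x\<bar> + \<bar>y\<bar>)"
      using e1 e2 e3 e4 e5 by linarith
    also have "\<dots> < d" using p pe by simp
    finally show "P p" by (rule d(2))
  qed (use d in auto)
next
  assume "\<exists>r>0. \<forall>p\<in>cube r. P p"
  then obtain r where r: "r > 0" "\<And>p. p \<in> cube r \<Longrightarrow> P p" by blast
  show "\<forall>\<^sub>F p in nhds (0,0,0). P p"
    unfolding eventually_nhds_metric
  proof (intro exI[of _ r] conjI allI impI)
    fix p :: "real \<times> real \<times> real" assume d: "dist p (0,0,0) < r"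
    have a1: "dist (fst p) 0 \<le> dist p (0,0,0)" using dist_fst_le[of p "(0,0,0)"] by simp
    have a2: "dist (fst (snd p)) 0 \<le> dist (snd p) (0,0)" using dist_fst_le[of "snd p" "(0,0)"] by simp
    have a3: "dist (snd (snd p)) 0 \<le> dist (snd p) (0,0)" using dist_snd_le[of "snd p" "(0,0)"] by simp
    have a4: "dist (snd p) (0,0) \<le> dist p (0,0,0)" using dist_snd_le[of p "(0,0,0)"] by simp
    have b1: "\<bar>fst p\<bar> < r" using a1 d unfolding dist_real_def by linarith
    have b2: "\<bar>fst (snd p)\<bar> < r" using a2 a4 d unfolding dist_real_def by linarith
    have b3: "\<bar>snd (snd p)\<bar> < r" using a3 a4 d unfolding dist_real_def by linarith
    have "p \<in> cube r" unfolding cube_def using b1 b2 b3 by blast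
    then show "P p" by (rule r)
  qed (use r in auto)
qed

lemma mn_case: "(\<lambda>(i,j,k). c (i,j,k) * t ^ i * x1 ^ j * x2 ^ k) = (\<lambda>n. c n * mn n (t,x1,x2))"
  by (simp add: fun_eq_iff split_def mn_def mult.assoc)

lemma analytic_iff: "analytic_at0 f \<longleftrightarrow> (\<exists>c r. r > 0 \<and> AC c r \<and> (\<forall>p\<in>cube r. f p = ev c p))"
proof
  assume "analytic_at0 f"
  then obtain r c where r: "r > 0" and hs: "\<And>t x1 x2. \<bar>t\<bar> < r \<and> \<bar>x1\<bar> < r \<and> \<bar>x2\<bar> < r \<Longrightarrow>
      ((\<lambda>n. c n * mn n (t,x1,x2)) has_sum f (t, x1, x2)) UNIV"
    unfolding analytic_at0_def mn_case by blast
  have hs': "((\<lambda>n. c n * mn n p) has_sum f p) UNIV" if "p \<in> cube r" for p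
    using that hs[of "fst p" "fst (snd p)" "snd (snd p)"] by (cases p) auto
  have "AC c r" unfolding AC_def using hs' has_sum_imp_summable by blast
  moreover have "\<forall>p\<in>cube r. f p = ev c p"
  proof
    fix p assume "p \<in> cube r"
    from infsumI[OF hs'[OF this]] show "f p = ev c p" unfolding ev_def by simp
  qed
  ultimately show "\<exists>c r. r > 0 \<and> AC c r \<and> (\<forall>p\<in>cube r. f p = ev c p)" using r by blast
next
  assume "\<exists>c r. r > 0 \<and> AC c r \<and> (\<forall>p\<in>cube r. f p = ev c p)"
  then obtain c r where r: "r > 0" "AC c r" "\<forall>p\<in>cube r. f p = ev c p" by blast
  have "\<forall>t x1 x2. \<bar>t\<bar> < r \<and> \<bar>x1\<bar> < r \<and> \<bar>x2\<bar> < r \<longrightarrow>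
          ((\<lambda>n. c n * mn n (t,x1,x2)) has_sum f (t, x1, x2)) UNIV"
    using r AC_has_sum[OF r(2)] by auto
  then show "analytic_at0 f" unfolding analytic_at0_def mn_case
    using r(1) by blast
qed

lemma analyticI: "r > 0 \<Longrightarrow> AC c r \<Longrightarrow> (\<And>p. p \<in> cube r \<Longrightarrow> f p = ev c p) \<Longrightarrow> analytic_at0 f"
  unfolding analytic_iff by blast

lemma analyticE: assumes "analytic_at0 f"
  obtains c r where "r > 0" "AC c r" "\<And>p. p \<in> cube r \<Longrightarrow> f p = ev c p"
  using assms unfolding analytic_iff by blast

lemma germ_eq_cube: "germ_eq f g \<longleftrightarrow> (\<exists>r>0. \<forall>p\<in>cube r. f p = g p)"
  unfolding germ_eq_def eventually_cube ..

lemma analytic_germ: assumes "analytic_at0 f" "germ_eq f g" shows "analytic_at0 g"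
proof -
  obtain c r where r: "r > 0" "AC c r" "\<And>p. p \<in> cube r \<Longrightarrow> f p = ev c p"
    using assms(1) using analyticE by blast
  obtain r2 where r2: "r2 > 0" "\<And>p. p \<in> cube r2 \<Longrightarrow> f p = g p"
    using assms(2) unfolding germ_eq_cube by blast
  show ?thesis
  proof (rule analyticI[of "min r r2" c])
    show "min r r2 > 0" using r r2 by simp
    show "AC c (min r r2)" using AC_mono[OF r(2)] by simp
    fix p assume p: "p \<in> cube (min r r2)"
    have "p \<in> cube r" "p \<in> cube r2" using cube_mono[OF _ p] by auto
    then show "g p = ev c p" using r r2 by metis
  qed
qed

lemma analytic_cong: "(\<And>p. f p = g p) \<Longrightarrow> analytic_at0 f \<Longrightarrow> analytic_at0 g"
proof -
  assume "\<And>p. f p = g p" then have "f = g" by auto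
  then show "analytic_at0 f \<Longrightarrow> analytic_at0 g" by simp
qed

subsection \<open>Linear closure\<close>

lemma AC_add: "AC c r \<Longrightarrow> AC d r \<Longrightarrow> AC (\<lambda>n. c n + d n) r"
  unfolding AC_def by (auto simp: distrib_right intro: summable_on_add)

lemma ev_add: "AC c r \<Longrightarrow> AC d r \<Longrightarrow> p \<in> cube r \<Longrightarrow> ev (\<lambda>n. c n + d n) p = ev c p + ev d p"
proof -
  assume a: "AC c r" "AC d r" "p \<in> cube r"
  have "((\<lambda>n. c n * mn n p + d n * mn n p) has_sum (ev c p + ev d p)) UNIV"
    by (rule has_sum_add[OF AC_has_sum[OF a(1,3)] AC_has_sum[OF a(2,3)]])
  then have "((\<lambda>n. (c n + d n) * mn n p) has_sum (ev c p + ev d p)) UNIV"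
    by (simp add: distrib_right)
  from infsumI[OF this] show ?thesis unfolding ev_def .
qed

lemma AC_scale: "AC c r \<Longrightarrow> AC (\<lambda>n. a * c n) r"
  unfolding AC_def by (auto simp: mult.assoc intro: summable_on_cmult_right)

lemma ev_scale: "ev (\<lambda>n. a * c n) p = a * ev c p"
  unfolding ev_def by (simp add: mult.assoc infsum_cmult_right')

lemma analytic_add: assumes "analytic_at0 f" "analytic_at0 g" shows "analytic_at0 (\<lambda>p. f p + g p)"
proof -
  obtain c r where r: "r > 0" "AC c r" "\<And>p. p \<in> cube r \<Longrightarrow> f p = ev c p"
    using assms(1) using analyticE by blast
  obtain d s where s: "s > 0" "AC d s" "\<And>p. p \<in> cube s \<Longrightarrow> g p = ev d p"
    using assms(2) using analyticE by blast
  let ?m = "min r s"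
  have a: "AC c ?m" "AC d ?m" using AC_mono r s by auto
  show ?thesis
  proof (rule analyticI[of ?m "\<lambda>n. c n + d n"])
    show "?m > 0" using r s by simp
    show "AC (\<lambda>n. c n + d n) ?m" using a by (rule AC_add)
    fix p assume p: "p \<in> cube ?m"
    have "p \<in> cube r" "p \<in> cube s" using cube_mono[OF _ p] by auto
    then show "f p + g p = ev (\<lambda>n. c n + d n) p" using r s ev_add[OF a p] by simp
  qed
qed

lemma analytic_scale: assumes "analytic_at0 f" shows "analytic_at0 (\<lambda>p. a * f p)"
proof -
  obtain c r where r: "r > 0" "AC c r" "\<And>p. p \<in> cube r \<Longrightarrow> f p = ev c p"
    using assms(1) using analyticE by blast
  show ?thesis
  proof (rule analyticI[of r "\<lambda>n. a * c n"])
    show "AC (\<lambda>n. a * c n) r" using r(2) by (rule AC_scale)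
  qed (use r in \<open>simp_all add: ev_scale\<close>)
qed

lemma analytic_minus: "analytic_at0 f \<Longrightarrow> analytic_at0 g \<Longrightarrow> analytic_at0 (\<lambda>p. f p - g p)"
  using analytic_add[of f "\<lambda>p. (-1) * g p"] analytic_scale[of g "-1"] by simp

lemma has_sum_single_point: "((\<lambda>n. if n = m then a * mn n p else 0) has_sum (a * mn m p)) UNIV"
  by (rule has_sum_finite_neutralI[of "{m}"]) auto

lemma AC_delta: "AC (\<lambda>n. if n = m then a else 0) r" and ev_delta: "ev (\<lambda>n. if n = m then a else 0) p = a * mn m p"
proof -
  have e: "(\<lambda>n. (if n = m then a else 0) * mn n p) = (\<lambda>n. if n = m then a * mn n p else 0)" for p
    by auto
  show "AC (\<lambda>n. if n = m then a else 0) r" unfolding AC_def e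
    using has_sum_single_point has_sum_imp_summable by blast
  show "ev (\<lambda>n. if n = m then a else 0) p = a * mn m p" unfolding ev_def e
    using has_sum_single_point infsumI by blast
qed

lemma analytic_const: "analytic_at0 (\<lambda>p. a)"
  by (rule analyticI[of 1 "\<lambda>n. if n = (0,0,0) then a else 0"]) (auto simp: AC_delta ev_delta mn_def)

lemma analytic_fst: "analytic_at0 (\<lambda>p. fst p)"
  by (rule analyticI[of 1 "\<lambda>n. if n = (1,0,0) then 1 else 0"]) (auto simp: AC_delta ev_delta mn_def)

lemma analytic_x1: "analytic_at0 (\<lambda>p. fst (snd p))"
  by (rule analyticI[of 1 "\<lambda>n. if n = (0,1,0) then 1 else 0"]) (auto simp: AC_delta ev_delta mn_def)

lemma analytic_x2: "analytic_at0 (\<lambda>p. snd (snd p))"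
  by (rule analyticI[of 1 "\<lambda>n. if n = (0,0,1) then 1 else 0"]) (auto simp: AC_delta ev_delta mn_def)

lemma has_sum_via_range:
  assumes "inj h" "\<And>n. n \<notin> range h \<Longrightarrow> g n = 0" "((\<lambda>n. g (h n)) has_sum s) UNIV"
  shows "(g has_sum s) UNIV"
proof -
  have "(g has_sum s) (range h)"
    using has_sum_reindex[of h UNIV g s] assms(1,3) by (simp add: o_def)
  then show ?thesis
    using has_sum_cong_neutral[of "range h" UNIV g g s] assms(2) by auto
qed

lemma has_sum_on_range:
  assumes "inj h" "((\<lambda>n. g (h n)) has_sum s) UNIV"
  shows "((\<lambda>n. if n \<in> range h then g n else 0) has_sum s) UNIV"
proof (rule has_sum_via_range[OF assms(1)])
  show "((\<lambda>n. if h n \<in> range h then g (h n) else 0) has_sum s) UNIV" using assms(2) by simp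
qed auto

lemma real_summable_absI: "(\<lambda>n. \<bar>f n\<bar>) summable_on A \<Longrightarrow> (f :: _ \<Rightarrow> real) summable_on A"
  using summable_on_iff_abs_summable_on_real[of f A] by simp

lemma AC_sub:
  assumes "AC c r" "inj h"
    and "\<And>p. p \<in> cube r' \<Longrightarrow> \<exists>q\<in>cube r. \<exists>K. \<forall>n. \<bar>d n * mn n p\<bar> \<le> K * \<bar>c (h n) * mn (h n) q\<bar>"
  shows "AC d r'"
  unfolding AC_def
proof
  fix p assume p: "p \<in> cube r'"
  obtain q K where q: "q \<in> cube r" and K: "\<And>n. \<bar>d n * mn n p\<bar> \<le> K * \<bar>c (h n) * mn (h n) q\<bar>"
    using assms(3)[OF p] by blast
  have s1: "(\<lambda>m. \<bar>c m * mn m q\<bar>) summable_on UNIV" by (rule AC_abs[OF assms(1) q])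
  have s2: "(\<lambda>m. \<bar>c m * mn m q\<bar>) summable_on range h"
    by (rule summable_on_subset[OF s1]) simp
  have s3: "(\<lambda>n. \<bar>c (h n) * mn (h n) q\<bar>) summable_on UNIV"
    using summable_on_reindex[of h UNIV "\<lambda>m. \<bar>c m * mn m q\<bar>"] s2 assms(2) by (simp add: o_def)
  have s4: "(\<lambda>n. K * \<bar>c (h n) * mn (h n) q\<bar>) summable_on UNIV"
    by (rule summable_on_cmult_right[OF s3])
  have s5: "(\<lambda>n. \<bar>d n * mn n p\<bar>) summable_on UNIV"
    by (rule summable_on_comparison_test[OF s4]) (use K in auto)
  show "(\<lambda>n. d n * mn n p) summable_on UNIV" by (rule real_summable_absI[OF s5])
qed

subsection \<open>Splitting off t = 0\<close>

definition cz :: "(nat \<times> nat \<times> nat \<Rightarrow> real) \<Rightarrow> nat \<times> nat \<times> nat \<Rightarrow> real" where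
  "cz c n = (if fst n = 0 then c n else 0)"
definition csh :: "(nat \<times> nat \<times> nat \<Rightarrow> real) \<Rightarrow> nat \<times> nat \<times> nat \<Rightarrow> real" where
  "csh c n = c (Suc (fst n), snd n)"

lemma abs_mn: "\<bar>mn n (t,x,y)\<bar> = \<bar>t\<bar> ^ fst n * \<bar>x\<bar> ^ fst (snd n) * \<bar>y\<bar> ^ snd (snd n)"
  by (simp add: mn_def abs_mult power_abs)

lemma AC_cz: assumes "AC c r" shows "AC (cz c) r"
proof (rule AC_sub[OF assms, of id])
  fix p assume "p \<in> cube r"
  moreover have "\<forall>n. \<bar>cz c n * mn n p\<bar> \<le> 1 * \<bar>c (id n) * mn (id n) p\<bar>"
    by (auto simp: cz_def)
  ultimately show "\<exists>q\<in>cube r. \<exists>K. \<forall>n. \<bar>cz c n * mn n p\<bar> \<le> K * \<bar>c (id n) * mn (id n) q\<bar>"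
    by blast
qed simp

lemma AC_csh: assumes "AC c r" shows "AC (csh c) r"
proof (rule AC_sub[OF assms, of "\<lambda>n. (Suc (fst n), snd n)"])
  show "inj (\<lambda>n. (Suc (fst n), snd n))" by (auto simp: inj_def prod_eq_iff)
  fix p assume p: "p \<in> cube r"
  obtain t x y where pe: "p = (t,x,y)" by (cases p) auto
  define \<rho> where "\<rho> = (\<bar>t\<bar> + r) / 2"
  have r\<rho>: "\<bar>t\<bar> \<le> \<rho>" "\<rho> < r" "\<rho> > 0" using p pe by (auto simp: \<rho>_def)
  have "(\<rho>,x,y) \<in> cube r" using p pe r\<rho> by auto
  moreover have "\<forall>n. \<bar>csh c n * mn n p\<bar> \<le> (1/\<rho>) * \<bar>c (Suc (fst n), snd n) * mn (Suc (fst n), snd n) (\<rho>,x,y)\<bar>"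
  proof
    fix n :: "nat \<times> nat \<times> nat"
    obtain i j k where ne: "n = (i,j,k)" by (cases n) auto
    have "\<bar>t\<bar> ^ i \<le> \<rho> ^ i" by (rule power_mono) (use r\<rho> in auto)
    then have "\<bar>c (Suc i, j, k)\<bar> * \<bar>t\<bar> ^ i * \<bar>x\<bar> ^ j * \<bar>y\<bar> ^ k \<le> \<bar>c (Suc i, j, k)\<bar> * \<rho> ^ i * \<bar>x\<bar> ^ j * \<bar>y\<bar> ^ k"
      by (intro mult_right_mono mult_left_mono) auto
    also have "\<dots> = (1/\<rho>) * (\<bar>c (Suc i, j, k)\<bar> * (\<rho> * \<rho> ^ i) * \<bar>x\<bar> ^ j * \<bar>y\<bar> ^ k)"
      using r\<rho> by (simp add: field_simps)
    finally show "\<bar>csh c n * mn n p\<bar> \<le> (1/\<rho>) * \<bar>c (Suc (fst n), snd n) * mn (Suc (fst n), snd n) (\<rho>,x,y)\<bar>"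
      using r\<rho> by (simp add: ne pe csh_def abs_mult power_abs)
  qed
  ultimately show "\<exists>q\<in>cube r. \<exists>K. \<forall>n. \<bar>csh c n * mn n p\<bar> \<le> K * \<bar>c (Suc (fst n), snd n) * mn (Suc (fst n), snd n) q\<bar>"
    by blast
qed

lemma ev_split0:
  assumes "AC c r" "(t,x,y) \<in> cube r"
  shows "ev c (t,x,y) = ev (cz c) (t,x,y) + t * ev (csh c) (t,x,y)"
proof -
  let ?p = "(t,x,y)"
  let ?h = "\<lambda>n::nat\<times>nat\<times>nat. (Suc (fst n), snd n)"
  have inj: "inj ?h" by (auto simp: inj_def prod_eq_iff)
  have rng: "n \<in> range ?h \<longleftrightarrow> fst n \<noteq> 0" for n
  proof
    assume "fst n \<noteq> 0" then show "n \<in> range ?h"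
      by (intro image_eqI[of _ _ "(fst n - 1, snd n)"]) auto
  qed auto
  have h1: "((\<lambda>n. t * (csh c n * mn n ?p)) has_sum t * ev (csh c) ?p) UNIV"
    by (rule has_sum_cmult_right[OF AC_has_sum[OF AC_csh[OF assms(1)] assms(2)]])
  have h1': "((\<lambda>n. c (?h n) * mn (?h n) ?p) has_sum t * ev (csh c) ?p) UNIV"
    using h1 by (simp add: csh_def mn_def mult_ac)
  have h2: "((\<lambda>n. if n \<in> range ?h then c n * mn n ?p else 0) has_sum t * ev (csh c) ?p) UNIV"
    by (rule has_sum_on_range[OF inj h1'])
  have h3: "((\<lambda>n. cz c n * mn n ?p) has_sum ev (cz c) ?p) UNIV"
    by (rule AC_has_sum[OF AC_cz[OF assms(1)] assms(2)])
  have "((\<lambda>n. cz c n * mn n ?p + (if n \<in> range ?h then c n * mn n ?p else 0)) has_sum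
     (ev (cz c) ?p + t * ev (csh c) ?p)) UNIV"
    by (rule has_sum_add[OF h3 h2])
  moreover have "(\<lambda>n. cz c n * mn n ?p + (if n \<in> range ?h then c n * mn n ?p else 0)) = (\<lambda>n. c n * mn n ?p)"
    by (auto simp: rng cz_def fun_eq_iff)
  ultimately have "((\<lambda>n. c n * mn n ?p) has_sum (ev (cz c) ?p + t * ev (csh c) ?p)) UNIV" by simp
  then show ?thesis unfolding ev_def[of c] by (rule infsumI)
qed

lemma ev_cz: "ev (cz c) (t,x,y) = ev (cz c) (0,x,y)"
proof -
  have "(\<lambda>n. cz c n * mn n (t,x,y)) = (\<lambda>n. cz c n * mn n (0,x,y))"
    by (auto simp: cz_def mn_def fun_eq_iff)
  then show ?thesis by (simp add: ev_def)
qed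

lemma analytic_split0:
  assumes "analytic_at0 f"
  shows "analytic_at0 (\<lambda>(t,x,y). f (0,x,y))"
    and "\<exists>h. analytic_at0 h \<and> germ_eq f (\<lambda>(t,x,y). f (0,x,y) + t * h (t,x,y))"
proof -
  obtain c r where r: "r > 0" "AC c r" "\<And>p. p \<in> cube r \<Longrightarrow> f p = ev c p"
    using assms analyticE by blast
  have e0: "f (0,x,y) = ev (cz c) (t,x,y)" if "(t,x,y) \<in> cube r" for t x y
  proof -
    have "(0,x,y) \<in> cube r" using that r by auto
    then have "f (0,x,y) = ev (cz c) (0,x,y)" using ev_split0[OF r(2)] r(3) by simp
    then show ?thesis using ev_cz[of c t x y] by simp
  qed
  show "analytic_at0 (\<lambda>(t,x,y). f (0,x,y))"
  proof (rule analyticI[OF r(1) AC_cz[OF r(2)]])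
    fix p assume "p \<in> cube r" then show "(case p of (t,x,y) \<Rightarrow> f (0,x,y)) = ev (cz c) p"
      using e0 by (cases p) auto
  qed
  have "analytic_at0 (ev (csh c))"
    by (rule analyticI[OF r(1) AC_csh[OF r(2)]]) simp
  moreover have "germ_eq f (\<lambda>(t,x,y). f (0,x,y) + t * ev (csh c) (t,x,y))"
    unfolding germ_eq_cube
  proof (intro exI[of _ r] conjI ballI)
    fix p assume p: "p \<in> cube r"
    obtain t x y where pe: "p = (t,x,y)" by (cases p) auto
    show "f p = (case p of (t,x,y) \<Rightarrow> f (0,x,y) + t * ev (csh c) (t,x,y))"
      using ev_split0[OF r(2)] e0[of t x y] r(3)[OF p] p pe by simp
  qed (use r in simp)
  ultimately show "\<exists>h. analytic_at0 h \<and> germ_eq f (\<lambda>(t,x,y). f (0,x,y) + t * h (t,x,y))" by blast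
qed

subsection \<open>Even and odd parts in t\<close>

definition ce :: "(nat \<times> nat \<times> nat \<Rightarrow> real) \<Rightarrow> nat \<times> nat \<times> nat \<Rightarrow> real" where
  "ce c n = c (2 * fst n, snd n)"
definition co :: "(nat \<times> nat \<times> nat \<Rightarrow> real) \<Rightarrow> nat \<times> nat \<times> nat \<Rightarrow> real" where
  "co c n = c (Suc (2 * fst n), snd n)"

lemma eo_radius:
  assumes r: "r > 0" and s: "\<bar>s\<bar> < min r (r\<^sup>2)"
  defines "\<rho> \<equiv> max (sqrt \<bar>s\<bar>) (r/2)"
  shows "\<rho> > 0" "\<rho> < r" "\<bar>s\<bar> \<le> \<rho>\<^sup>2"
proof -
  show "\<rho> > 0" using r by (simp add: \<rho>_def)
  have "sqrt \<bar>s\<bar> < sqrt (r\<^sup>2)" using s by (intro real_sqrt_less_mono) simp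
  then have "sqrt \<bar>s\<bar> < r" using r by simp
  then show "\<rho> < r" using r by (simp add: \<rho>_def)
  have "sqrt \<bar>s\<bar> \<le> \<rho>" by (simp add: \<rho>_def)
  then have "(sqrt \<bar>s\<bar>)\<^sup>2 \<le> \<rho>\<^sup>2" by (intro power_mono) auto
  then show "\<bar>s\<bar> \<le> \<rho>\<^sup>2" by simp
qed

lemma AC_ce: assumes "AC c r" "r > 0" shows "AC (ce c) (min r (r\<^sup>2))"
proof (rule AC_sub[OF assms(1), of "\<lambda>n. (2 * fst n, snd n)"])
  show "inj (\<lambda>n::nat\<times>nat\<times>nat. (2 * fst n, snd n))" by (auto simp: inj_def prod_eq_iff)
  fix p assume p: "p \<in> cube (min r (r\<^sup>2))"
  obtain s x y where pe: "p = (s,x,y)" by (cases p) auto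
  have s: "\<bar>s\<bar> < min r (r\<^sup>2)" using p pe by simp
  define \<rho> where "\<rho> = max (sqrt \<bar>s\<bar>) (r/2)"
  have r\<rho>: "\<rho> > 0" "\<rho> < r" "\<bar>s\<bar> \<le> \<rho>\<^sup>2" using eo_radius[OF assms(2) s] by (simp_all add: \<rho>_def)
  have "(\<rho>,x,y) \<in> cube r" using p pe r\<rho> by auto
  moreover have "\<forall>n. \<bar>ce c n * mn n p\<bar> \<le> 1 * \<bar>c (2 * fst n, snd n) * mn (2 * fst n, snd n) (\<rho>,x,y)\<bar>"
  proof
    fix n :: "nat \<times> nat \<times> nat"
    obtain i j k where ne: "n = (i,j,k)" by (cases n) auto
    have "\<bar>s\<bar> ^ i \<le> (\<rho>\<^sup>2) ^ i" by (rule power_mono) (use r\<rho> in auto)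
    then have "\<bar>c (2*i, j, k)\<bar> * \<bar>s\<bar> ^ i * \<bar>x\<bar> ^ j * \<bar>y\<bar> ^ k \<le> \<bar>c (2*i, j, k)\<bar> * (\<rho>\<^sup>2) ^ i * \<bar>x\<bar> ^ j * \<bar>y\<bar> ^ k"
      by (intro mult_right_mono mult_left_mono) auto
    then show "\<bar>ce c n * mn n p\<bar> \<le> 1 * \<bar>c (2 * fst n, snd n) * mn (2 * fst n, snd n) (\<rho>,x,y)\<bar>"
      using r\<rho> by (simp add: ne pe ce_def abs_mult power_abs power_mult)
  qed
  ultimately show "\<exists>q\<in>cube r. \<exists>K. \<forall>n. \<bar>ce c n * mn n p\<bar> \<le> K * \<bar>c (2 * fst n, snd n) * mn (2 * fst n, snd n) q\<bar>"
    by blast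
qed

lemma AC_co: assumes "AC c r" "r > 0" shows "AC (co c) (min r (r\<^sup>2))"
proof (rule AC_sub[OF assms(1), of "\<lambda>n. (Suc (2 * fst n), snd n)"])
  show "inj (\<lambda>n::nat\<times>nat\<times>nat. (Suc (2 * fst n), snd n))" by (auto simp: inj_def prod_eq_iff)
  fix p assume p: "p \<in> cube (min r (r\<^sup>2))"
  obtain s x y where pe: "p = (s,x,y)" by (cases p) auto
  have s: "\<bar>s\<bar> < min r (r\<^sup>2)" using p pe by simp
  define \<rho> where "\<rho> = max (sqrt \<bar>s\<bar>) (r/2)"
  have r\<rho>: "\<rho> > 0" "\<rho> < r" "\<bar>s\<bar> \<le> \<rho>\<^sup>2" using eo_radius[OF assms(2) s] by (simp_all add: \<rho>_def)
  have "(\<rho>,x,y) \<in> cube r" using p pe r\<rho> by auto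
  moreover have "\<forall>n. \<bar>co c n * mn n p\<bar> \<le> (1/\<rho>) * \<bar>c (Suc (2 * fst n), snd n) * mn (Suc (2 * fst n), snd n) (\<rho>,x,y)\<bar>"
  proof
    fix n :: "nat \<times> nat \<times> nat"
    obtain i j k where ne: "n = (i,j,k)" by (cases n) auto
    have "\<bar>s\<bar> ^ i \<le> (\<rho>\<^sup>2) ^ i" by (rule power_mono) (use r\<rho> in auto)
    then have "\<bar>c (Suc (2*i), j, k)\<bar> * \<bar>s\<bar> ^ i * \<bar>x\<bar> ^ j * \<bar>y\<bar> ^ k \<le> \<bar>c (Suc (2*i), j, k)\<bar> * (\<rho>\<^sup>2) ^ i * \<bar>x\<bar> ^ j * \<bar>y\<bar> ^ k"
      by (intro mult_right_mono mult_left_mono) auto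
    also have "\<dots> = (1/\<rho>) * (\<bar>c (Suc (2*i), j, k)\<bar> * (\<rho> * (\<rho>\<^sup>2) ^ i) * \<bar>x\<bar> ^ j * \<bar>y\<bar> ^ k)"
      using r\<rho> by (simp add: field_simps)
    finally show "\<bar>co c n * mn n p\<bar> \<le> (1/\<rho>) * \<bar>c (Suc (2 * fst n), snd n) * mn (Suc (2 * fst n), snd n) (\<rho>,x,y)\<bar>"
      using r\<rho> by (simp add: ne pe co_def abs_mult power_abs power_mult)
  qed
  ultimately show "\<exists>q\<in>cube r. \<exists>K. \<forall>n. \<bar>co c n * mn n p\<bar> \<le> K * \<bar>c (Suc (2 * fst n), snd n) * mn (Suc (2 * fst n), snd n) q\<bar>"
    by blast
qed

lemma range_he: "n \<in> range (\<lambda>n::nat\<times>nat\<times>nat. (2 * fst n, snd n)) \<longleftrightarrow> even (fst n)"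
proof
  assume "even (fst n)" then show "n \<in> range (\<lambda>n::nat\<times>nat\<times>nat. (2 * fst n, snd n))"
    by (intro image_eqI[of _ _ "(fst n div 2, snd n)"]) auto
qed auto

lemma range_ho: "n \<in> range (\<lambda>n::nat\<times>nat\<times>nat. (Suc (2 * fst n), snd n)) \<longleftrightarrow> odd (fst n)"
proof
  assume "odd (fst n)" then show "n \<in> range (\<lambda>n::nat\<times>nat\<times>nat. (Suc (2 * fst n), snd n))"
    by (intro image_eqI[of _ _ "(fst n div 2, snd n)"]) (auto elim!: oddE)
qed auto

lemma ev_split_eo:
  assumes "AC c r" "r > 0" "(t,x,y) \<in> cube r" "(t\<^sup>2,x,y) \<in> cube (min r (r\<^sup>2))"
  shows "ev c (t,x,y) = ev (ce c) (t\<^sup>2,x,y) + t * ev (co c) (t\<^sup>2,x,y)"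
proof -
  let ?p = "(t,x,y)" and ?q = "(t\<^sup>2,x,y)"
  let ?he = "\<lambda>n::nat\<times>nat\<times>nat. (2 * fst n, snd n)" and ?ho = "\<lambda>n::nat\<times>nat\<times>nat. (Suc (2 * fst n), snd n)"
  have ie: "inj ?he" and io: "inj ?ho" by (auto simp: inj_def prod_eq_iff)
  have A: "((\<lambda>n. ce c n * mn n ?q) has_sum ev (ce c) ?q) UNIV"
    by (rule AC_has_sum[OF AC_ce[OF assms(1,2)] assms(4)])
  have A': "((\<lambda>n. c (?he n) * mn (?he n) ?p) has_sum ev (ce c) ?q) UNIV"
    using A by (simp add: ce_def mn_def power_mult)
  have B: "((\<lambda>n. t * (co c n * mn n ?q)) has_sum t * ev (co c) ?q) UNIV"
    by (rule has_sum_cmult_right[OF AC_has_sum[OF AC_co[OF assms(1,2)] assms(4)]])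
  have B': "((\<lambda>n. c (?ho n) * mn (?ho n) ?p) has_sum t * ev (co c) ?q) UNIV"
  proof -
    have "c (?ho n) * mn (?ho n) ?p = t * (co c n * mn n ?q)" for n
      apply (cases n)
      apply (simp add: co_def power_mult)
      done
    then show ?thesis using B by simp
  qed
  have "((\<lambda>n. (if n \<in> range ?he then c n * mn n ?p else 0) + (if n \<in> range ?ho then c n * mn n ?p else 0))
     has_sum (ev (ce c) ?q + t * ev (co c) ?q)) UNIV"
    by (rule has_sum_add[OF has_sum_on_range[OF ie A'] has_sum_on_range[OF io B']])
  moreover have "(\<lambda>n. (if n \<in> range ?he then c n * mn n ?p else 0) + (if n \<in> range ?ho then c n * mn n ?p else 0))
     = (\<lambda>n. c n * mn n ?p)"
    unfolding range_he range_ho by (auto simp: fun_eq_iff)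
  ultimately have "((\<lambda>n. c n * mn n ?p) has_sum (ev (ce c) ?q + t * ev (co c) ?q)) UNIV" by simp
  then show ?thesis unfolding ev_def[of c] by (rule infsumI)
qed

lemma sq_le_abs: "\<bar>t::real\<bar> < 1 \<Longrightarrow> t\<^sup>2 \<le> \<bar>t\<bar>"
proof -
  assume a: "\<bar>t\<bar> < 1"
  have "t\<^sup>2 = \<bar>t\<bar> * \<bar>t\<bar>" by (simp add: power2_eq_square)
  also have "\<dots> \<le> \<bar>t\<bar> * 1" by (rule mult_left_mono) (use a in auto)
  finally show ?thesis by simp
qed

lemma analytic_eo:
  assumes "analytic_at0 f"
  shows "\<exists>fe fo. analytic_at0 fe \<and> analytic_at0 fo \<and>
           germ_eq f (\<lambda>(t,x,y). fe (t\<^sup>2,x,y) + t * fo (t\<^sup>2,x,y))"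
proof -
  obtain c r where r: "r > 0" "AC c r" "\<And>p. p \<in> cube r \<Longrightarrow> f p = ev c p"
    using assms analyticE by blast
  define r' where "r' = min r (r\<^sup>2)"
  have r'0: "r' > 0" using r by (simp add: r'_def)
  have "analytic_at0 (ev (ce c))"
    by (rule analyticI[OF r'0 AC_ce[OF r(2,1), folded r'_def]]) simp
  moreover have "analytic_at0 (ev (co c))"
    by (rule analyticI[OF r'0 AC_co[OF r(2,1), folded r'_def]]) simp
  moreover have "germ_eq f (\<lambda>(t,x,y). ev (ce c) (t\<^sup>2,x,y) + t * ev (co c) (t\<^sup>2,x,y))"
    unfolding germ_eq_cube
  proof (intro exI[of _ "min r' 1"] conjI ballI)
    fix p assume p: "p \<in> cube (min r' 1)"
    obtain t x y where pe: "p = (t,x,y)" by (cases p) auto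
    have pr: "p \<in> cube r" using p cube_mono[of "min r' 1" r p] by (auto simp: r'_def)
    have "t\<^sup>2 \<le> \<bar>t\<bar>" using p pe by (intro sq_le_abs) simp
    then have q: "(t\<^sup>2,x,y) \<in> cube (min r (r\<^sup>2))" using p pe by (auto simp: r'_def)
    show "f p = (case p of (t,x,y) \<Rightarrow> ev (ce c) (t\<^sup>2,x,y) + t * ev (co c) (t\<^sup>2,x,y))"
      using ev_split_eo[OF r(2,1) _ q] r(3)[OF pr] pr pe by simp
  qed (use r'0 in simp)
  ultimately show ?thesis by blast
qed

subsection \<open>Composition with t \<mapsto> t^2\<close>

definition cs :: "(nat \<times> nat \<times> nat \<Rightarrow> real) \<Rightarrow> nat \<times> nat \<times> nat \<Rightarrow> real" where
  "cs c n = (if even (fst n) then c (fst n div 2, snd n) else 0)"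

lemma has_sum_cs:
  assumes "AC c r" "(t\<^sup>2,x,y) \<in> cube r"
  shows "((\<lambda>n. cs c n * mn n (t,x,y)) has_sum ev c (t\<^sup>2,x,y)) UNIV"
proof (rule has_sum_via_range[of "\<lambda>n::nat\<times>nat\<times>nat. (2 * fst n, snd n)"])
  show "inj (\<lambda>n::nat\<times>nat\<times>nat. (2 * fst n, snd n))" by (auto simp: inj_def prod_eq_iff)
  show "cs c n * mn n (t,x,y) = 0" if "n \<notin> range (\<lambda>n::nat\<times>nat\<times>nat. (2 * fst n, snd n))" for n
    using that unfolding range_he by (simp add: cs_def)
  show "((\<lambda>n. cs c (2 * fst n, snd n) * mn (2 * fst n, snd n) (t,x,y)) has_sum ev c (t\<^sup>2,x,y)) UNIV"
    using AC_has_sum[OF assms] by (simp add: cs_def mn_def power_mult)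
qed

lemma analytic_comp_sq:
  assumes "analytic_at0 f" shows "analytic_at0 (\<lambda>(t,x,y). f (t\<^sup>2,x,y))"
proof -
  obtain c r where r: "r > 0" "AC c r" "\<And>p. p \<in> cube r \<Longrightarrow> f p = ev c p"
    using assms analyticE by blast
  have q: "(t\<^sup>2,x,y) \<in> cube r" if "(t,x,y) \<in> cube (min r 1)" for t x y
  proof -
    have "t\<^sup>2 \<le> \<bar>t\<bar>" using that by (intro sq_le_abs) simp
    then show ?thesis using that by auto
  qed
  have ac: "AC (cs c) (min r 1)" unfolding AC_def
  proof
    fix p assume "p \<in> cube (min r 1)" then obtain t x y where pe: "p = (t,x,y)" "(t,x,y) \<in> cube (min r 1)"
      by (cases p) auto
    show "(\<lambda>n. cs c n * mn n p) summable_on UNIV"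
      using has_sum_cs[OF r(2) q[OF pe(2)]] pe(1) has_sum_imp_summable by blast
  qed
  show ?thesis
  proof (rule analyticI[of "min r 1" "cs c"])
    fix p assume "p \<in> cube (min r 1)" then obtain t x y where pe: "p = (t,x,y)" "(t,x,y) \<in> cube (min r 1)"
      by (cases p) auto
    have "ev (cs c) p = ev c (t\<^sup>2,x,y)" unfolding ev_def[of "cs c"] pe(1)
      by (rule infsumI[OF has_sum_cs[OF r(2) q[OF pe(2)]]])
    then show "(case p of (t,x,y) \<Rightarrow> f (t\<^sup>2,x,y)) = ev (cs c) p"
      using r(3)[OF q[OF pe(2)]] pe(1) by simp
  qed (use r ac in auto)
qed

subsection \<open>Products\<close>

definition conv :: "(nat \<times> nat \<times> nat \<Rightarrow> real) \<Rightarrow> (nat \<times> nat \<times> nat \<Rightarrow> real) \<Rightarrow> nat \<times> nat \<times> nat \<Rightarrow> real" where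
  "conv c d n = (\<Sum>a\<in>{a. a \<le> n}. c a * d (n - a))"

lemma finite_le_triple: "finite {a :: nat \<times> nat \<times> nat. a \<le> n}"
proof (rule finite_subset)
  show "{a :: nat \<times> nat \<times> nat. a \<le> n} \<subseteq> {..fst n} \<times> {..fst (snd n)} \<times> {..snd (snd n)}"
    by (auto simp: less_eq_prod_def)
qed auto

lemma mn_add: "mn (a + b) p = mn a p * mn b p"
  by (simp add: mn_def power_add mult_ac)

lemma triple_add_diff: "(a :: nat \<times> nat \<times> nat) \<le> n \<Longrightarrow> a + (n - a) = n"
  by (cases a; cases n) auto

lemma triple_diff_add: "(a :: nat \<times> nat \<times> nat) + b - a = b"
  by (cases a; cases b) auto

lemma triple_le_add: "(a :: nat \<times> nat \<times> nat) \<le> a + b"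
  by (cases a; cases b) auto

lemma has_sum_prod_pairs:
  fixes f g :: "'a \<Rightarrow> real"
  assumes "(f has_sum F) UNIV" "(g has_sum G) UNIV"
    and "(\<lambda>a. \<bar>f a\<bar>) summable_on UNIV" "(\<lambda>b. \<bar>g b\<bar>) summable_on UNIV"
  shows "((\<lambda>(a,b). f a * g b) has_sum (F * G)) UNIV"
proof -
  have s1: "(\<lambda>(a,b). \<bar>f a\<bar> * \<bar>g b\<bar>) summable_on Sigma UNIV (\<lambda>_. UNIV)"
  proof (rule summable_on_SigmaI[where g = "\<lambda>a. \<bar>f a\<bar> * infsum (\<lambda>b. \<bar>g b\<bar>) UNIV"])
    fix a :: 'a
    show "((\<lambda>b. case (a, b) of (a, b) \<Rightarrow> \<bar>f a\<bar> * \<bar>g b\<bar>) has_sum \<bar>f a\<bar> * infsum (\<lambda>b. \<bar>g b\<bar>) UNIV) UNIV"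
      using has_sum_cmult_right[OF has_sum_infsum[OF assms(4)], of "\<bar>f a\<bar>"] by simp
  next
    show "(\<lambda>a. \<bar>f a\<bar> * infsum (\<lambda>b. \<bar>g b\<bar>) UNIV) summable_on UNIV"
      by (rule summable_on_cmult_left[OF assms(3)])
  qed auto
  have s2: "(\<lambda>(a,b). f a * g b) summable_on Sigma UNIV (\<lambda>_. UNIV)"
  proof (rule real_summable_absI)
    show "(\<lambda>x. \<bar>case x of (a, b) \<Rightarrow> f a * g b\<bar>) summable_on Sigma UNIV (\<lambda>_. UNIV)"
      using s1 by (simp add: case_prod_unfold abs_mult)
  qed
  have "((\<lambda>(a,b). f a * g b) has_sum (F * G)) (Sigma UNIV (\<lambda>_. UNIV))"
  proof (rule has_sum_SigmaI[where g = "\<lambda>a. f a * G"])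
    show "((\<lambda>b. case (a, b) of (a, b) \<Rightarrow> f a * g b) has_sum f a * G) UNIV" for a
      using has_sum_cmult_right[OF assms(2), of "f a"] by simp
    show "((\<lambda>a. f a * G) has_sum F * G) UNIV" by (rule has_sum_cmult_left[OF assms(1)])
  qed (use s2 in auto)
  then show ?thesis by simp
qed

lemma has_sum_group:
  fixes H :: "(nat \<times> nat \<times> nat) \<times> (nat \<times> nat \<times> nat) \<Rightarrow> real"
  assumes "(H has_sum S) UNIV"
  shows "((\<lambda>n. \<Sum>a\<in>{a. a \<le> n}. H (a, n - a)) has_sum S) UNIV"
proof -
  have "(H has_sum S) UNIV = ((\<lambda>(n,a). H (a, n - a)) has_sum S) (Sigma UNIV (\<lambda>n. {a. a \<le> n}))"
    by (rule has_sum_reindex_bij_witness[where i = "\<lambda>(n,a). (a, n - a)" and j = "\<lambda>(a,b). (a + b, a)"])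
       (auto simp: triple_add_diff triple_diff_add triple_le_add)
  with assms have "((\<lambda>(n,a). H (a, n - a)) has_sum S) (Sigma UNIV (\<lambda>n. {a. a \<le> n}))" by simp
  then show ?thesis
  proof (rule has_sum_Sigma')
    fix n :: "nat \<times> nat \<times> nat"
    show "((\<lambda>a. case (n, a) of (n, a) \<Rightarrow> H (a, n - a)) has_sum (\<Sum>a\<in>{a. a \<le> n}. H (a, n - a))) {a. a \<le> n}"
      using finite_le_triple[of n] by simp
  qed
qed

lemma AC_conv_has_sum:
  assumes "AC c r" "AC d r" "p \<in> cube r"
  shows "((\<lambda>n. conv c d n * mn n p) has_sum (ev c p * ev d p)) UNIV"
proof -
  have "((\<lambda>(a,b). (c a * mn a p) * (d b * mn b p)) has_sum (ev c p * ev d p)) UNIV"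
    by (rule has_sum_prod_pairs[OF AC_has_sum[OF assms(1,3)] AC_has_sum[OF assms(2,3)]
          AC_abs[OF assms(1,3)] AC_abs[OF assms(2,3)]])
  from has_sum_group[OF this]
  have "((\<lambda>n. \<Sum>a\<in>{a. a \<le> n}. (c a * mn a p) * (d (n - a) * mn (n - a) p)) has_sum (ev c p * ev d p)) UNIV"
    by simp
  moreover have "(\<Sum>a\<in>{a. a \<le> n}. (c a * mn a p) * (d (n - a) * mn (n - a) p)) = conv c d n * mn n p" for n
  proof -
    have "(\<Sum>a\<in>{a. a \<le> n}. (c a * mn a p) * (d (n - a) * mn (n - a) p))
        = (\<Sum>a\<in>{a. a \<le> n}. c a * d (n - a) * mn n p)"
    proof (rule sum.cong)
      fix a assume "a \<in> {a. a \<le> n}"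
      then have "mn a p * mn (n - a) p = mn n p" using mn_add[of a "n - a" p] triple_add_diff[of a n] by simp
      then show "(c a * mn a p) * (d (n - a) * mn (n - a) p) = c a * d (n - a) * mn n p"
        by (metis mult.commute mult.left_commute)
    qed simp
    also have "\<dots> = conv c d n * mn n p" by (simp add: conv_def sum_distrib_right)
    finally show ?thesis .
  qed
  ultimately show ?thesis by simp
qed

lemma AC_conv: "AC c r \<Longrightarrow> AC d r \<Longrightarrow> AC (conv c d) r"
  unfolding AC_def[of "conv c d"] using AC_conv_has_sum has_sum_imp_summable by blast

lemma ev_conv: "AC c r \<Longrightarrow> AC d r \<Longrightarrow> p \<in> cube r \<Longrightarrow> ev (conv c d) p = ev c p * ev d p"
  unfolding ev_def[of "conv c d"] using AC_conv_has_sum infsumI by blast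

lemma analytic_mult: assumes "analytic_at0 f" "analytic_at0 g" shows "analytic_at0 (\<lambda>p. f p * g p)"
proof -
  obtain c r where r: "r > 0" "AC c r" "\<And>p. p \<in> cube r \<Longrightarrow> f p = ev c p"
    using assms(1) analyticE by blast
  obtain d s where s: "s > 0" "AC d s" "\<And>p. p \<in> cube s \<Longrightarrow> g p = ev d p"
    using assms(2) analyticE by blast
  let ?m = "min r s"
  have a: "AC c ?m" "AC d ?m" using AC_mono r s by auto
  show ?thesis
  proof (rule analyticI[of ?m "conv c d"])
    show "?m > 0" using r s by simp
    show "AC (conv c d) ?m" using a by (rule AC_conv)
    fix p assume p: "p \<in> cube ?m"
    have "p \<in> cube r" "p \<in> cube s" using cube_mono[OF _ p] by auto
    then show "f p * g p = ev (conv c d) p" using r s ev_conv[OF a p] by simp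
  qed
qed

definition dco :: "(nat \<times> nat \<times> nat \<Rightarrow> real) \<Rightarrow> nat \<times> nat \<times> nat \<Rightarrow> real" where
  "dco c n = real (Suc (fst n)) * c (Suc (fst n), snd n)"

lemma bound_n_pow:
  assumes "0 \<le> q" "q < (1::real)"
  obtains B where "B > 0" "\<And>i. real (Suc i) * q ^ i \<le> B"
proof -
  have nq: "norm q < 1" using assms by simp
  have "(\<lambda>n. of_nat n * q ^ n) \<longlonglongrightarrow> 0" by (rule powser_times_n_limit_0[OF nq])
  then have "Bseq (\<lambda>n. of_nat n * q ^ n)" by (rule convergent_imp_Bseq[OF convergentI])
  then obtain K where K: "K > 0" "\<And>n. norm (of_nat n * q ^ n) \<le> K" unfolding Bseq_def by blast
  show ?thesis
  proof (rule that[of "K + 1"])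
    fix i
    have "real i * q ^ i \<le> K" using K(2)[of i] assms by simp
    moreover have "q ^ i \<le> 1" using assms by (simp add: power_le_one)
    ultimately show "real (Suc i) * q ^ i \<le> K + 1" by (simp add: distrib_right)
  qed (use K in simp)
qed

lemma AC_dco: assumes "AC c r" shows "AC (dco c) r"
proof (rule AC_sub[OF assms, of "\<lambda>n. (Suc (fst n), snd n)"])
  show "inj (\<lambda>n::nat\<times>nat\<times>nat. (Suc (fst n), snd n))" by (auto simp: inj_def prod_eq_iff)
  fix p assume p: "p \<in> cube r"
  obtain t x y where pe: "p = (t,x,y)" by (cases p) auto
  define \<rho> where "\<rho> = (\<bar>t\<bar> + r) / 2"
  have r\<rho>: "\<bar>t\<bar> < \<rho>" "\<rho> < r" "\<rho> > 0" using p pe by (auto simp: \<rho>_def)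
  obtain B where B: "B > 0" "\<And>i. real (Suc i) * (\<bar>t\<bar>/\<rho>) ^ i \<le> B"
    using bound_n_pow[of "\<bar>t\<bar>/\<rho>"] r\<rho> by auto
  have "(\<rho>,x,y) \<in> cube r" using p pe r\<rho> by auto
  moreover have "\<forall>n. \<bar>dco c n * mn n p\<bar> \<le> (B/\<rho>) * \<bar>c (Suc (fst n), snd n) * mn (Suc (fst n), snd n) (\<rho>,x,y)\<bar>"
  proof
    fix n :: "nat \<times> nat \<times> nat"
    obtain i j k where ne: "n = (i,j,k)" by (cases n) auto
    have "real (Suc i) * \<bar>t\<bar> ^ i = (real (Suc i) * (\<bar>t\<bar>/\<rho>) ^ i) * \<rho> ^ i"
      using r\<rho> by (simp add: power_divide)
    also have "\<dots> \<le> B * \<rho> ^ i" by (rule mult_right_mono[OF B(2)]) (use r\<rho> in simp)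
    finally have a: "real (Suc i) * \<bar>t\<bar> ^ i \<le> B * \<rho> ^ i" .
    have "\<bar>c (Suc i, j, k)\<bar> * (real (Suc i) * \<bar>t\<bar> ^ i) * \<bar>x\<bar> ^ j * \<bar>y\<bar> ^ k \<le> \<bar>c (Suc i, j, k)\<bar> * (B * \<rho> ^ i) * \<bar>x\<bar> ^ j * \<bar>y\<bar> ^ k"
      by (intro mult_right_mono mult_left_mono a) auto
    also have "\<dots> = (B/\<rho>) * (\<bar>c (Suc i, j, k)\<bar> * (\<rho> * \<rho> ^ i) * \<bar>x\<bar> ^ j * \<bar>y\<bar> ^ k)"
      using r\<rho> by (simp add: field_simps)
    finally show "\<bar>dco c n * mn n p\<bar> \<le> (B/\<rho>) * \<bar>c (Suc (fst n), snd n) * mn (Suc (fst n), snd n) (\<rho>,x,y)\<bar>"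
      using r\<rho> by (simp add: ne pe dco_def abs_mult power_abs mult_ac)
  qed
  ultimately show "\<exists>q\<in>cube r. \<exists>K. \<forall>n. \<bar>dco c n * mn n p\<bar> \<le> K * \<bar>c (Suc (fst n), snd n) * mn (Suc (fst n), snd n) q\<bar>"
    by blast
qed

definition Cf :: "(nat \<times> nat \<times> nat \<Rightarrow> real) \<Rightarrow> real \<Rightarrow> real \<Rightarrow> nat \<Rightarrow> real" where
  "Cf c x y i = (\<Sum>\<^sub>\<infinity>jk. c (i, jk) * (x ^ fst jk * y ^ snd jk))"

lemma mn_split: "mn (i, jk) (s,x,y) = s ^ i * (x ^ fst jk * y ^ snd jk)"
  by (simp add: mn_def mult_ac)

lemma Cf_has_sum:
  assumes "AC c r" "(s,x,y) \<in> cube r"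
  shows "((\<lambda>jk. c (i, jk) * (x ^ fst jk * y ^ snd jk)) has_sum Cf c x y i) UNIV"
proof -
  define \<rho> where "\<rho> = r / 2"
  have r0: "r > 0" using assms(2) by (auto intro: le_less_trans[OF abs_ge_zero])
  have q: "(\<rho>,x,y) \<in> cube r" using assms(2) r0 by (simp add: \<rho>_def)
  have "(\<lambda>n. c n * mn n (\<rho>,x,y)) summable_on UNIV" using AC_has_sum[OF assms(1) q] has_sum_imp_summable by blast
  then have "(\<lambda>n. c n * mn n (\<rho>,x,y)) summable_on range (\<lambda>jk. (i,jk))"
    by (rule summable_on_subset) simp
  then have "(\<lambda>jk. c (i,jk) * mn (i,jk) (\<rho>,x,y)) summable_on UNIV"
    using summable_on_reindex[of "\<lambda>jk. (i,jk)" UNIV "\<lambda>n. c n * mn n (\<rho>,x,y)"] by (simp add: inj_def o_def)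
  then have "(\<lambda>jk. (c (i, jk) * (x ^ fst jk * y ^ snd jk)) * \<rho> ^ i) summable_on UNIV"
    by (simp add: mn_split mult_ac)
  then have "(\<lambda>jk. c (i, jk) * (x ^ fst jk * y ^ snd jk)) summable_on UNIV"
    using summable_on_cmult_left'[of "\<rho> ^ i" "\<lambda>jk. c (i, jk) * (x ^ fst jk * y ^ snd jk)" UNIV] r0
    by (simp add: \<rho>_def)
  then show ?thesis unfolding Cf_def by (rule has_sum_infsum)
qed

lemma ev_powser:
  assumes "AC c r" "(s,x,y) \<in> cube r"
  shows "((\<lambda>i. Cf c x y i * s ^ i) has_sum ev c (s,x,y)) UNIV"
proof -
  have "((\<lambda>n. c n * mn n (s,x,y)) has_sum ev c (s,x,y)) (Sigma UNIV (\<lambda>_. UNIV))"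
    using AC_has_sum[OF assms] by simp
  then show ?thesis
  proof (rule has_sum_Sigma')
    fix i :: nat
    show "((\<lambda>jk. c (i, jk) * mn (i, jk) (s,x,y)) has_sum Cf c x y i * s ^ i) UNIV"
      using has_sum_cmult_right[OF Cf_has_sum[OF assms, of i], of "s ^ i"]
      by (simp add: mn_split mult_ac)
  qed
qed

lemma Cf_dco: assumes "AC c r" "(s,x,y) \<in> cube r" shows "Cf (dco c) x y i = diffs (Cf c x y) i"
proof -
  have "Cf (dco c) x y i = (\<Sum>\<^sub>\<infinity>jk. real (Suc i) * (c (Suc i, jk) * (x ^ fst jk * y ^ snd jk)))"
    unfolding Cf_def dco_def by (simp add: mult_ac)
  also have "\<dots> = real (Suc i) * Cf c x y (Suc i)" unfolding Cf_def by (rule infsum_cmult_right')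
  finally show ?thesis by (simp add: diffs_def)
qed

lemma ev_deriv:
  assumes "AC c r" "(t,x,y) \<in> cube r"
  shows "((\<lambda>s. ev c (s,x,y)) has_real_derivative ev (dco c) (t,x,y)) (at t)"
proof -
  have sm: "summable (\<lambda>i. Cf c x y i * z ^ i)" if "norm z < r" for z
  proof -
    have "(z,x,y) \<in> cube r" using that assms(2) by simp
    from has_sum_imp_sums[OF ev_powser[OF assms(1) this]] show ?thesis by (rule sums_summable)
  qed
  have "((\<lambda>z. \<Sum>i. Cf c x y i * z ^ i) has_field_derivative (\<Sum>i. diffs (Cf c x y) i * t ^ i)) (at t)"
    by (rule termdiffs_strong'[OF sm]) (use assms(2) in auto)
  moreover have "(\<Sum>i. diffs (Cf c x y) i * t ^ i) = ev (dco c) (t,x,y)"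
  proof -
    have "((\<lambda>i. Cf (dco c) x y i * t ^ i) has_sum ev (dco c) (t,x,y)) UNIV"
      by (rule ev_powser[OF AC_dco[OF assms(1)] assms(2)])
    then have "(\<lambda>i. diffs (Cf c x y) i * t ^ i) sums ev (dco c) (t,x,y)"
      using Cf_dco[OF assms] has_sum_imp_sums by simp
    then show ?thesis by (rule sums_unique[symmetric])
  qed
  ultimately have d: "((\<lambda>z. \<Sum>i. Cf c x y i * z ^ i) has_field_derivative ev (dco c) (t,x,y)) (at t)" by simp
  show ?thesis
  proof (rule has_field_derivative_transform_within_open[OF d, of "ball 0 r"])
    show "t \<in> ball 0 r" using assms(2) by simp
    fix s :: real assume "s \<in> ball 0 r"
    then have "(s,x,y) \<in> cube r" using assms(2) by simp
    from has_sum_imp_sums[OF ev_powser[OF assms(1) this]] show "(\<Sum>i. Cf c x y i * s ^ i) = ev c (s,x,y)"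
      by (rule sums_unique[symmetric])
  qed simp
qed

lemma pdiff0_deriv:
  assumes "analytic_at0 f"
  obtains r c where "r > 0" "AC c r" "\<And>p. p \<in> cube r \<Longrightarrow> f p = ev c p"
    "\<And>t x y. (t,x,y) \<in> cube r \<Longrightarrow> ((\<lambda>s. f (s,x,y)) has_real_derivative pdiff 0 f (t,x,y)) (at t)"
    "\<And>p. p \<in> cube r \<Longrightarrow> pdiff 0 f p = ev (dco c) p"
proof -
  obtain c r where r: "r > 0" "AC c r" "\<And>p. p \<in> cube r \<Longrightarrow> f p = ev c p"
    using assms analyticE by blast
  have d: "((\<lambda>s. f (s,x,y)) has_real_derivative ev (dco c) (t,x,y)) (at t)" if "(t,x,y) \<in> cube r" for t x y
  proof (rule has_field_derivative_transform_within_open[OF ev_deriv[OF r(2) that], of "ball 0 r"])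
    show "t \<in> ball 0 r" using that by simp
    fix s :: real assume "s \<in> ball 0 r"
    then have "(s,x,y) \<in> cube r" using that by simp
    then show "ev c (s,x,y) = f (s,x,y)" using r(3) by simp
  qed simp
  have e: "pdiff 0 f (t,x,y) = ev (dco c) (t,x,y)" if "(t,x,y) \<in> cube r" for t x y
    using DERIV_imp_deriv[OF d[OF that]] by (simp add: pdiff_def)
  show ?thesis
  proof (rule that[OF r])
    show "((\<lambda>s. f (s,x,y)) has_real_derivative pdiff 0 f (t,x,y)) (at t)" if "(t,x,y) \<in> cube r" for t x y
      using d[OF that] e[OF that] by simp
    show "pdiff 0 f p = ev (dco c) p" if "p \<in> cube r" for p
      using e that by (cases p) auto
  qed
qed

lemma analytic_pdiff0: assumes "analytic_at0 f" shows "analytic_at0 (pdiff 0 f)"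
proof -
  obtain r c where r: "r > 0" "AC c r" "\<And>p. p \<in> cube r \<Longrightarrow> f p = ev c p"
    "\<And>t x y. (t,x,y) \<in> cube r \<Longrightarrow> ((\<lambda>s. f (s,x,y)) has_real_derivative pdiff 0 f (t,x,y)) (at t)"
    "\<And>p. p \<in> cube r \<Longrightarrow> pdiff 0 f p = ev (dco c) p"
    using pdiff0_deriv[OF assms] by blast
  show ?thesis by (rule analyticI[OF r(1) AC_dco[OF r(2)]]) (use r(5) in simp)
qed

subsection \<open>Permuting coordinates\<close>

lemma analytic_perm:
  fixes \<sigma> :: "real \<times> real \<times> real \<Rightarrow> real \<times> real \<times> real" and \<pi> :: "nat \<times> nat \<times> nat \<Rightarrow> nat \<times> nat \<times> nat"
  assumes "analytic_at0 f"
    and inv: "\<And>n. \<pi> (\<pi> n) = n"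
    and cube: "\<And>r p. p \<in> cube r \<Longrightarrow> \<sigma> p \<in> cube r"
    and mnp: "\<And>n p. mn (\<pi> n) (\<sigma> p) = mn n p"
  shows "analytic_at0 (\<lambda>p. f (\<sigma> p))"
proof -
  obtain c r where r: "r > 0" "AC c r" "\<And>p. p \<in> cube r \<Longrightarrow> f p = ev c p"
    using assms analyticE by blast
  have hs: "((\<lambda>n. c (\<pi> n) * mn n p) has_sum ev c (\<sigma> p)) UNIV" if "p \<in> cube r" for p
  proof -
    have "((\<lambda>m. c m * mn m (\<sigma> p)) has_sum ev c (\<sigma> p)) UNIV" by (rule AC_has_sum[OF r(2) cube[OF that]])
    moreover have "((\<lambda>n. c (\<pi> n) * mn n p) has_sum ev c (\<sigma> p)) UNIV \<longleftrightarrow>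
        ((\<lambda>m. c m * mn m (\<sigma> p)) has_sum ev c (\<sigma> p)) UNIV"
      by (rule has_sum_reindex_bij_witness[where i = \<pi> and j = \<pi>]) (auto simp: inv mnp)
    ultimately show ?thesis by simp
  qed
  have ac: "AC (\<lambda>n. c (\<pi> n)) r" unfolding AC_def using hs has_sum_imp_summable by blast
  show ?thesis
  proof (rule analyticI[OF r(1) ac])
    fix p assume p: "p \<in> cube r"
    have "ev (\<lambda>n. c (\<pi> n)) p = ev c (\<sigma> p)" unfolding ev_def[of "\<lambda>n. c (\<pi> n)"] by (rule infsumI[OF hs[OF p]])
    then show "f (\<sigma> p) = ev (\<lambda>n. c (\<pi> n)) p" using r(3)[OF cube[OF p]] by simp
  qed
qed

definition sw1 :: "real \<times> real \<times> real \<Rightarrow> real \<times> real \<times> real" where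
  "sw1 p = (fst (snd p), fst p, snd (snd p))"
definition sw2 :: "real \<times> real \<times> real \<Rightarrow> real \<times> real \<times> real" where
  "sw2 p = (snd (snd p), fst (snd p), fst p)"

lemma analytic_sw1: "analytic_at0 f \<Longrightarrow> analytic_at0 (\<lambda>p. f (sw1 p))"
  by (rule analytic_perm[where \<pi> = "\<lambda>n. (fst (snd n), fst n, snd (snd n))"])
     (auto simp: sw1_def mn_def cube_def)

lemma analytic_sw2: "analytic_at0 f \<Longrightarrow> analytic_at0 (\<lambda>p. f (sw2 p))"
  by (rule analytic_perm[where \<pi> = "\<lambda>n. (snd (snd n), fst (snd n), fst n)"])
     (auto simp: sw2_def mn_def cube_def)

lemma pdiff1_sw: "pdiff 1 f p = pdiff 0 (\<lambda>q. f (sw1 q)) (sw1 p)"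
  by (cases p) (simp add: pdiff_def sw1_def)

lemma pdiff2_sw: "pdiff 2 f p = pdiff 0 (\<lambda>q. f (sw2 q)) (sw2 p)"
  by (cases p) (simp add: pdiff_def sw2_def)

lemma analytic_pdiff1: "analytic_at0 f \<Longrightarrow> analytic_at0 (pdiff 1 f)"
  unfolding pdiff1_sw by (intro analytic_sw1 analytic_pdiff0)

lemma analytic_pdiff2: "analytic_at0 f \<Longrightarrow> analytic_at0 (pdiff 2 f)"
  unfolding pdiff2_sw by (intro analytic_sw2 analytic_pdiff0)

lemma mn_diag: "mn n (\<rho>,\<rho>,\<rho>) = \<rho> ^ (fst n + fst (snd n) + snd (snd n))"
  by (simp add: mn_def power_add)

lemma mn_nonneg: "\<rho> \<ge> 0 \<Longrightarrow> mn n (\<rho>,\<rho>,\<rho>) \<ge> 0"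
  by (simp add: mn_diag)

lemma abs_mn_le: assumes "p \<in> cube \<rho>" shows "\<bar>mn n p\<bar> \<le> mn n (\<rho>,\<rho>,\<rho>)"
proof -
  obtain t x y where pe: "p = (t,x,y)" by (cases p) auto
  obtain i j k where ne: "n = (i,j,k)" by (cases n) auto
  have a: "\<bar>t\<bar> \<le> \<rho>" "\<bar>x\<bar> \<le> \<rho>" "\<bar>y\<bar> \<le> \<rho>" using assms pe by auto
  have "\<bar>t\<bar> ^ i * \<bar>x\<bar> ^ j * \<bar>y\<bar> ^ k \<le> \<rho> ^ i * \<rho> ^ j * \<rho> ^ k"
    by (intro mult_mono power_mono) (use a in auto)
  then show ?thesis by (simp add: pe ne abs_mult power_abs)
qed

lemma AC_absc: assumes "AC c r" shows "AC (\<lambda>n. \<bar>c n\<bar>) r"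
proof (rule AC_sub[OF assms, of id])
  fix p assume p: "p \<in> cube r"
  obtain t x y where pe: "p = (t,x,y)" by (cases p) auto
  have "(\<bar>t\<bar>,\<bar>x\<bar>,\<bar>y\<bar>) \<in> cube r" using p pe by simp
  moreover have "\<forall>n. \<bar>\<bar>c n\<bar> * mn n p\<bar> \<le> 1 * \<bar>c (id n) * mn (id n) (\<bar>t\<bar>,\<bar>x\<bar>,\<bar>y\<bar>)\<bar>"
    by (simp add: pe mn_def abs_mult power_abs)
  ultimately show "\<exists>q\<in>cube r. \<exists>K. \<forall>n. \<bar>\<bar>c n\<bar> * mn n p\<bar> \<le> K * \<bar>c (id n) * mn (id n) q\<bar>" by blast
qed simp

lemma abs_conv_le: "\<bar>conv c d n\<bar> \<le> conv (\<lambda>n. \<bar>c n\<bar>) (\<lambda>n. \<bar>d n\<bar>) n"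
  unfolding conv_def by (rule order_trans[OF sum_abs]) (simp add: abs_mult)

primrec pw :: "(nat \<times> nat \<times> nat \<Rightarrow> real) \<Rightarrow> nat \<Rightarrow> nat \<times> nat \<times> nat \<Rightarrow> real" where
  "pw b 0 = (\<lambda>n. if n = (0,0,0) then 1 else 0)"
| "pw b (Suc m) = conv b (pw b m)"

lemma AC_pw: "AC b r \<Longrightarrow> AC (pw b m) r"
  by (induction m) (auto simp: AC_delta intro: AC_conv)

lemma ev_pw: "AC b r \<Longrightarrow> p \<in> cube r \<Longrightarrow> ev (pw b m) p = ev b p ^ m"
  by (induction m) (auto simp: ev_delta ev_conv AC_pw mn_def)

lemma infsum_abs_diag:
  assumes "AC c r" "0 \<le> \<rho>" "\<rho> < r"
  shows "((\<lambda>n. \<bar>c n\<bar> * mn n (\<rho>,\<rho>,\<rho>)) has_sum ev (\<lambda>n. \<bar>c n\<bar>) (\<rho>,\<rho>,\<rho>)) UNIV"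
  using AC_has_sum[OF AC_absc[OF assms(1)]] assms by simp

lemma pw_maj:
  assumes "AC b r" "0 \<le> \<rho>" "\<rho> < r"
  shows "ev (\<lambda>n. \<bar>pw b m n\<bar>) (\<rho>,\<rho>,\<rho>) \<le> ev (\<lambda>n. \<bar>b n\<bar>) (\<rho>,\<rho>,\<rho>) ^ m"
proof (induction m)
  case 0
  have "ev (\<lambda>n. \<bar>pw b 0 n\<bar>) (\<rho>,\<rho>,\<rho>) = ev (\<lambda>n. if n = (0,0,0) then 1 else 0) (\<rho>,\<rho>,\<rho>)"
    by (rule arg_cong[of _ _ "\<lambda>c. ev c (\<rho>,\<rho>,\<rho>)"]) auto
  then show ?case by (simp add: ev_delta mn_def)
next
  case (Suc m)
  let ?q = "(\<rho>,\<rho>,\<rho>)"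
  let ?B = "\<lambda>n. \<bar>b n\<bar>" and ?P = "\<lambda>n. \<bar>pw b m n\<bar>"
  have q: "?q \<in> cube r" using assms by simp
  have acB: "AC ?B r" and acP: "AC ?P r" using AC_absc AC_pw assms(1) by auto
  have "ev (\<lambda>n. \<bar>pw b (Suc m) n\<bar>) ?q \<le> ev (conv ?B ?P) ?q"
  proof (rule has_sum_mono[OF infsum_abs_diag[OF AC_pw[OF assms(1)] assms(2,3)] AC_has_sum[OF AC_conv[OF acB acP] q]])
    fix n :: "nat\<times>nat\<times>nat"
    show "\<bar>pw b (Suc m) n\<bar> * mn n ?q \<le> conv ?B ?P n * mn n ?q"
      using abs_conv_le[of b "pw b m" n] mn_nonneg[OF assms(2), of n] by (simp add: mult_right_mono)
  qed
  also have "\<dots> = ev ?B ?q * ev ?P ?q" by (rule ev_conv[OF acB acP q])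
  also have "\<dots> \<le> ev ?B ?q * ev ?B ?q ^ m"
  proof (rule mult_left_mono[OF Suc.IH])
    show "0 \<le> ev ?B ?q" using has_sum_nonneg[OF infsum_abs_diag[OF assms]] mn_nonneg[OF assms(2)] by simp
  qed
  finally show ?case by simp
qed

lemma ev_small:
  assumes "AC c r" "c (0,0,0) = 0" "0 < \<rho>" "\<rho> \<le> \<rho>0" "\<rho>0 < r"
  shows "ev (\<lambda>n. \<bar>c n\<bar>) (\<rho>,\<rho>,\<rho>) \<le> (\<rho>/\<rho>0) * ev (\<lambda>n. \<bar>c n\<bar>) (\<rho>0,\<rho>0,\<rho>0)"
proof -
  have h1: "((\<lambda>n. (\<rho>/\<rho>0) * (\<bar>c n\<bar> * mn n (\<rho>0,\<rho>0,\<rho>0))) has_sum (\<rho>/\<rho>0) * ev (\<lambda>n. \<bar>c n\<bar>) (\<rho>0,\<rho>0,\<rho>0)) UNIV"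
    by (rule has_sum_cmult_right[OF infsum_abs_diag[OF assms(1)]]) (use assms in auto)
  have h2: "((\<lambda>n. \<bar>c n\<bar> * mn n (\<rho>,\<rho>,\<rho>)) has_sum ev (\<lambda>n. \<bar>c n\<bar>) (\<rho>,\<rho>,\<rho>)) UNIV"
    by (rule infsum_abs_diag[OF assms(1)]) (use assms in auto)
  show ?thesis
  proof (rule has_sum_mono[OF h2 h1])
    fix n :: "nat \<times> nat \<times> nat"
    show "\<bar>c n\<bar> * mn n (\<rho>,\<rho>,\<rho>) \<le> \<rho> / \<rho>0 * (\<bar>c n\<bar> * mn n (\<rho>0,\<rho>0,\<rho>0))"
    proof (cases "n = (0,0,0)")
      case True then show ?thesis using assms(2) by simp
    next
      case False
      define d where "d = fst n + fst (snd n) + snd (snd n)"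
      have "d \<noteq> 0" using False by (cases n) (auto simp: d_def)
      then obtain e where de: "d = Suc e" by (cases d) auto
      have "\<rho> ^ e \<le> \<rho>0 ^ e" by (rule power_mono) (use assms in auto)
      then have "\<rho> * \<rho> ^ e \<le> \<rho> * \<rho>0 ^ e" by (rule mult_left_mono) (use assms in auto)
      also have "\<dots> = \<rho> / \<rho>0 * (\<rho>0 * \<rho>0 ^ e)" using assms by (simp add: field_simps)
      finally have "\<rho> ^ d \<le> \<rho> / \<rho>0 * \<rho>0 ^ d" by (simp add: de)
      then have "\<bar>c n\<bar> * \<rho> ^ d \<le> \<bar>c n\<bar> * (\<rho> / \<rho>0 * \<rho>0 ^ d)" by (rule mult_left_mono) simp
      then show ?thesis by (simp add: mn_diag d_def[symmetric] mult_ac)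
    qed
  qed
qed

lemma recip_AC:
  assumes "AC b r" "b (0,0,0) = 0" "r > 0"
  shows "\<exists>\<rho> D. \<rho> > 0 \<and> AC D \<rho> \<and> (\<forall>p\<in>cube \<rho>. ev D p * (1 - ev b p) = 1)"
proof -
  let ?B = "\<lambda>n. \<bar>b n\<bar>"
  define \<rho>0 where "\<rho>0 = r / 2"
  define B0 where "B0 = ev ?B (\<rho>0,\<rho>0,\<rho>0)"
  define \<rho> where "\<rho> = min \<rho>0 (\<rho>0 / (2 * (\<bar>B0\<bar> + 1)))"
  have \<rho>0: "0 < \<rho>0" "\<rho>0 < r" using assms by (auto simp: \<rho>0_def)
  have \<rho>: "0 < \<rho>" "\<rho> \<le> \<rho>0" using \<rho>0 by (auto simp: \<rho>_def)
  let ?q = "(\<rho>,\<rho>,\<rho>)"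
  have q: "?q \<in> cube r" using \<rho> \<rho>0 by auto
  define Bq where "Bq = ev ?B ?q"
  have Bq0: "0 \<le> Bq" unfolding Bq_def
    using has_sum_nonneg[OF infsum_abs_diag[OF assms(1)]] mn_nonneg \<rho> \<rho>0 by simp
  have "Bq \<le> (\<rho>/\<rho>0) * B0" unfolding Bq_def B0_def by (rule ev_small[OF assms(1,2) \<rho> \<rho>0(2)])
  also have "\<dots> \<le> (1 / (2 * (\<bar>B0\<bar> + 1))) * \<bar>B0\<bar>"
  proof -
    have "\<rho> \<le> \<rho>0 / (2 * (\<bar>B0\<bar> + 1))" by (simp add: \<rho>_def)
    then have "\<rho>/\<rho>0 \<le> (\<rho>0 / (2 * (\<bar>B0\<bar> + 1))) / \<rho>0" by (rule divide_right_mono) (use \<rho>0 in simp)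
    also have "\<dots> = 1 / (2 * (\<bar>B0\<bar> + 1))" using \<rho>0 by simp
    finally have "\<rho>/\<rho>0 \<le> 1 / (2 * (\<bar>B0\<bar> + 1))" .
    moreover have "B0 \<le> \<bar>B0\<bar>" by simp
    ultimately show ?thesis using \<rho> \<rho>0
      by (intro order_trans[OF mult_left_mono[of B0 "\<bar>B0\<bar>" "\<rho>/\<rho>0"] mult_right_mono]) auto
  qed
  also have "\<dots> \<le> 1/2" by (simp add: field_simps)
  finally have Bq: "Bq \<le> 1/2" .
  define H where "H = (\<lambda>(m::nat, n::nat\<times>nat\<times>nat). \<bar>pw b m n\<bar> * mn n ?q)"
  have Hm: "((\<lambda>n. H (m, n)) has_sum ev (\<lambda>n. \<bar>pw b m n\<bar>) ?q) UNIV" for m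
    unfolding H_def using infsum_abs_diag[OF AC_pw[OF assms(1)] _ _, of \<rho> m] \<rho> \<rho>0 by simp
  have Sm: "0 \<le> ev (\<lambda>n. \<bar>pw b m n\<bar>) ?q" "ev (\<lambda>n. \<bar>pw b m n\<bar>) ?q \<le> (1/2) ^ m" for m
  proof -
    show "0 \<le> ev (\<lambda>n. \<bar>pw b m n\<bar>) ?q" using has_sum_nonneg[OF Hm[of m]] unfolding H_def
      using mn_nonneg \<rho> by simp
    have "ev (\<lambda>n. \<bar>pw b m n\<bar>) ?q \<le> Bq ^ m" unfolding Bq_def by (rule pw_maj[OF assms(1)]) (use \<rho> \<rho>0 in auto)
    also have "\<dots> \<le> (1/2) ^ m" by (rule power_mono[OF Bq Bq0])
    finally show "ev (\<lambda>n. \<bar>pw b m n\<bar>) ?q \<le> (1/2) ^ m" .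
  qed
  have geo: "(\<lambda>m. (1/2::real) ^ m) summable_on UNIV"
    using summable_on_UNIV_nonneg_real_iff[of "\<lambda>m. (1/2::real) ^ m"] summable_geometric[of "1/2::real"] by simp
  have Ssum: "(\<lambda>m. ev (\<lambda>n. \<bar>pw b m n\<bar>) ?q) summable_on UNIV"
    by (rule summable_on_comparison_test[OF geo]) (use Sm in auto)
  have Hs: "H summable_on Sigma UNIV (\<lambda>_. UNIV)"
    by (rule summable_on_SigmaI[OF Hm Ssum]) (use mn_nonneg \<rho> in \<open>auto simp: H_def\<close>)
  have colsum: "(\<lambda>m. pw b m n) summable_on UNIV" for n
  proof -
    have "(\<lambda>(n,m). H (m,n)) summable_on UNIV \<times> UNIV" using Hs summable_on_swap[where f=H and A=UNIV and B=UNIV] by simp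
    then have "(\<lambda>m. H (m,n)) summable_on UNIV"
      using summable_on_SigmaD1[of "\<lambda>n m. H (m,n)" UNIV "\<lambda>_. UNIV" n] by (simp add: case_prod_unfold)
    then have "(\<lambda>m. \<bar>pw b m n\<bar> * mn n ?q) summable_on UNIV" by (simp add: H_def)
    moreover have "mn n ?q \<noteq> 0" using \<rho> by (simp add: mn_diag)
    ultimately have "(\<lambda>m. \<bar>pw b m n\<bar>) summable_on UNIV"
      using summable_on_cmult_left'[of "mn n ?q" "\<lambda>m. \<bar>pw b m n\<bar>" UNIV] by simp
    then show ?thesis by (rule real_summable_absI)
  qed
  define D where "D n = (\<Sum>\<^sub>\<infinity>m. pw b m n)" for n
  have main: "((\<lambda>n. D n * mn n p) has_sum (1 / (1 - ev b p))) UNIV" if p: "p \<in> cube \<rho>" for p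
  proof -
    define G where "G = (\<lambda>(m::nat, n::nat\<times>nat\<times>nat). pw b m n * mn n p)"
    have pr: "p \<in> cube r" using cube_mono[OF _ p] \<rho> \<rho>0 by auto
    have Gs: "G summable_on Sigma UNIV (\<lambda>_. UNIV)"
    proof (rule real_summable_absI)
      show "(\<lambda>x. \<bar>G x\<bar>) summable_on Sigma UNIV (\<lambda>_. UNIV)"
      proof (rule summable_on_comparison_test[OF Hs])
        fix x :: "nat \<times> nat \<times> nat \<times> nat"
        obtain m n where xe: "x = (m,n)" by (cases x) auto
        have "\<bar>mn n p\<bar> \<le> mn n ?q" by (rule abs_mn_le[OF p])
        then show "\<bar>G x\<bar> \<le> H x" by (simp add: G_def H_def xe abs_mult mult_left_mono)
      qed simp
    qed
    define T where "T = infsum G (Sigma UNIV (\<lambda>_. UNIV))"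
    have GT: "(G has_sum T) (Sigma UNIV (\<lambda>_. UNIV))" unfolding T_def by (rule has_sum_infsum[OF Gs])
    \<comment> \<open>sum by m first\<close>
    have "((\<lambda>m. ev b p ^ m) has_sum T) UNIV"
    proof (rule has_sum_Sigma'[OF GT])
      fix m :: nat
      show "((\<lambda>n. G (m, n)) has_sum ev b p ^ m) UNIV"
        using AC_has_sum[OF AC_pw[OF assms(1)] pr, of m] ev_pw[OF assms(1) pr, of m] by (simp add: G_def)
    qed
    moreover have yb: "\<bar>ev b p\<bar> \<le> 1/2"
    proof -
      have "\<bar>ev b p\<bar> \<le> ev ?B ?q"
      proof -
        have h1: "((\<lambda>n. b n * mn n p) has_sum ev b p) UNIV" by (rule AC_has_sum[OF assms(1) pr])
        have "\<bar>ev b p\<bar> \<le> infsum (\<lambda>n. \<bar>b n * mn n p\<bar>) UNIV"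
          using norm_infsum_bound[of "\<lambda>n. b n * mn n p" UNIV] AC_abs[OF assms(1) pr] unfolding ev_def by simp
        also have "\<dots> \<le> ev ?B ?q" unfolding ev_def
        proof (rule infsum_mono)
          show "(\<lambda>n. \<bar>b n * mn n p\<bar>) summable_on UNIV" by (rule AC_abs[OF assms(1) pr])
          show "(\<lambda>n. \<bar>b n\<bar> * mn n ?q) summable_on UNIV"
            using infsum_abs_diag[OF assms(1), of \<rho>] \<rho> \<rho>0 has_sum_imp_summable by auto
          fix n show "\<bar>b n * mn n p\<bar> \<le> \<bar>b n\<bar> * mn n ?q"
            using abs_mn_le[OF p, of n] by (simp add: abs_mult mult_left_mono)
        qed
        finally show ?thesis .
      qed
      then show ?thesis using Bq unfolding Bq_def by simp
    qed
    ultimately have T: "T = 1 / (1 - ev b p)"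
    proof -
      assume "((\<lambda>m. ev b p ^ m) has_sum T) UNIV"
      then have "(\<lambda>m. ev b p ^ m) sums T" by (rule has_sum_imp_sums)
      moreover have "(\<lambda>m. ev b p ^ m) sums (1 / (1 - ev b p))" by (rule geometric_sums) (use yb in simp)
      ultimately show ?thesis using sums_unique2 by blast
    qed
    \<comment> \<open>sum by n first\<close>
    have "((\<lambda>(n,m). G (m,n)) has_sum T) (UNIV \<times> UNIV)" using GT has_sum_swap[where f=G and S=T and A=UNIV and B=UNIV] by simp
    then have "((\<lambda>n. D n * mn n p) has_sum T) UNIV"
    proof (rule has_sum_Sigma')
      fix n :: "nat \<times> nat \<times> nat"
      show "((\<lambda>m. case (n, m) of (n, m) \<Rightarrow> G (m, n)) has_sum D n * mn n p) UNIV"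
        using has_sum_cmult_left[OF has_sum_infsum[OF colsum[of n]], of "mn n p"] by (simp add: G_def D_def)
    qed
    then show ?thesis using T by simp
  qed
  have acD: "AC D \<rho>" unfolding AC_def using main has_sum_imp_summable by blast
  have "\<forall>p\<in>cube \<rho>. ev D p * (1 - ev b p) = 1"
  proof
    fix p assume p: "p \<in> cube \<rho>"
    have "ev D p = 1 / (1 - ev b p)" unfolding ev_def[of D] by (rule infsumI[OF main[OF p]])
    moreover have "ev b p \<noteq> 1"
    proof -
      have pr: "p \<in> cube r" using cube_mono[OF _ p] \<rho> \<rho>0 by auto
      have "\<bar>ev b p\<bar> \<le> ev ?B ?q"
      proof -
        have h1: "((\<lambda>n. b n * mn n p) has_sum ev b p) UNIV" by (rule AC_has_sum[OF assms(1) pr])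
        have "\<bar>ev b p\<bar> \<le> infsum (\<lambda>n. \<bar>b n * mn n p\<bar>) UNIV"
          using norm_infsum_bound[of "\<lambda>n. b n * mn n p" UNIV] AC_abs[OF assms(1) pr] unfolding ev_def by simp
        also have "\<dots> \<le> ev ?B ?q" unfolding ev_def
        proof (rule infsum_mono)
          show "(\<lambda>n. \<bar>b n * mn n p\<bar>) summable_on UNIV" by (rule AC_abs[OF assms(1) pr])
          show "(\<lambda>n. \<bar>b n\<bar> * mn n ?q) summable_on UNIV"
            using infsum_abs_diag[OF assms(1), of \<rho>] \<rho> \<rho>0 has_sum_imp_summable by auto
          fix n show "\<bar>b n * mn n p\<bar> \<le> \<bar>b n\<bar> * mn n ?q"
            using abs_mn_le[OF p, of n] by (simp add: abs_mult mult_left_mono)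
        qed
        finally show ?thesis .
      qed
      then show ?thesis using Bq unfolding Bq_def by auto
    qed
    ultimately show "ev D p * (1 - ev b p) = 1" by simp
  qed
  then show ?thesis using acD \<rho> by blast
qed

lemma ev_zero: "AC c r \<Longrightarrow> r > 0 \<Longrightarrow> ev c (0,0,0) = c (0,0,0)"
proof -
  assume a: "AC c r" "r > 0"
  have "((\<lambda>n. c n * mn n (0,0,0)) has_sum c (0,0,0)) UNIV"
  proof (rule has_sum_finite_neutralI[of "{(0,0,0)}"])
    fix n :: "nat\<times>nat\<times>nat" assume "n \<in> UNIV - {(0,0,0)}"
    then show "c n * mn n (0,0,0) = 0" by (cases n) (auto simp: mn_def zero_power)
  qed (auto simp: mn_def)
  then show ?thesis unfolding ev_def by (rule infsumI)
qed

lemma analytic_recip: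
  assumes "analytic_at0 f" "f (0,0,0) \<noteq> 0"
  shows "\<exists>g. analytic_at0 g \<and> germ_eq (\<lambda>p. g p * f p) (\<lambda>_. 1)"
proof -
  obtain c r where r: "r > 0" "AC c r" "\<And>p. p \<in> cube r \<Longrightarrow> f p = ev c p"
    using assms(1) analyticE by blast
  define a where "a = c (0,0,0)"
  have a: "a = f (0,0,0)" using r(3)[of "(0,0,0)"] ev_zero[OF r(2,1)] r(1) by (simp add: a_def)
  have a0: "a \<noteq> 0" using a assms(2) by simp
  define b where "b n = (-1/a) * (c n + (if n = (0,0,0) then -a else 0))" for n
  have acb: "AC b r" unfolding b_def by (intro AC_scale AC_add[OF r(2)] AC_delta)
  have b0: "b (0,0,0) = 0" by (simp add: b_def a_def)
  have evb: "ev b p = 1 - f p / a" if "p \<in> cube r" for p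
  proof -
    have e1: "ev b p = (-1/a) * ev (\<lambda>n. c n + (if n = (0,0,0) then -a else 0)) p"
      unfolding b_def by (rule ev_scale)
    have e2: "ev (\<lambda>n. c n + (if n = (0,0,0) then -a else 0)) p = ev c p + (-a) * mn (0,0,0) p"
      by (rule trans[OF ev_add[OF r(2) AC_delta that]]) (simp add: ev_delta)
    have e3: "mn (0,0,0) p = 1" by (cases p) simp
    show ?thesis using e1 e2 e3 r(3)[OF that] a0 by (simp add: field_simps)
  qed
  obtain \<rho> D where D: "\<rho> > 0" "AC D \<rho>" "\<forall>p\<in>cube \<rho>. ev D p * (1 - ev b p) = 1"
    using recip_AC[OF acb b0 r(1)] by blast
  have "analytic_at0 (\<lambda>p. (1/a) * ev D p)"
    by (rule analytic_scale, rule analyticI[OF D(1,2)]) simp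
  moreover have "germ_eq (\<lambda>p. (1/a) * ev D p * f p) (\<lambda>_. 1)"
    unfolding germ_eq_cube
  proof (intro exI[of _ "min \<rho> r"] conjI ballI)
    fix p assume p: "p \<in> cube (min \<rho> r)"
    have p1: "p \<in> cube \<rho>" "p \<in> cube r" using cube_mono[OF _ p] by auto
    have x: "1 - ev b p = f p / a" using evb[OF p1(2)] by simp
    have "ev D p * (1 - ev b p) = 1" using D(3) p1(1) by blast
    then have fx: "ev D p * (f p / a) = 1" by (simp only: x)
    have m: "(1/a) * ev D p * f p = ev D p * (f p / a)" by (simp add: divide_inverse mult_ac)
    show "(1/a) * ev D p * f p = 1" unfolding m by (rule fx)
  qed (use D r in simp)
  ultimately show ?thesis by blast
qed

lemma germ_eq_refl: "germ_eq f f" by (simp add: germ_eq_def)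

lemma germ_eq_sym: "germ_eq f g \<Longrightarrow> germ_eq g f"
  unfolding germ_eq_def by (auto elim: eventually_mono)

lemma germ_eq_trans: "germ_eq f g \<Longrightarrow> germ_eq g h \<Longrightarrow> germ_eq f h"
  unfolding germ_eq_def by (auto elim: eventually_elim2)

lemma germ_eq_add: "germ_eq f f' \<Longrightarrow> germ_eq g g' \<Longrightarrow> germ_eq (\<lambda>p. f p + g p) (\<lambda>p. f' p + g' p)"
  unfolding germ_eq_def by (auto elim: eventually_elim2)

lemma germ_eq_mult: "germ_eq f f' \<Longrightarrow> germ_eq g g' \<Longrightarrow> germ_eq (\<lambda>p. f p * g p) (\<lambda>p. f' p * g' p)"
  unfolding germ_eq_def by (auto elim: eventually_elim2)

lemma germ_eq_at0: "germ_eq f g \<Longrightarrow> f (0,0,0) = g (0,0,0)"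
  unfolding germ_eq_def by (rule eventually_nhds_x_imp_x)

lemma germ_eqI: "r > 0 \<Longrightarrow> (\<And>p. p \<in> cube r \<Longrightarrow> f p = g p) \<Longrightarrow> germ_eq f g"
  unfolding germ_eq_cube by blast

definition sq1 :: "real \<times> real \<times> real \<Rightarrow> real \<times> real \<times> real" where
  "sq1 p = ((fst p)\<^sup>2, fst (snd p), snd (snd p))"

lemma sq1_cube: "p \<in> cube (min r 1) \<Longrightarrow> sq1 p \<in> cube r"
proof -
  assume p: "p \<in> cube (min r 1)"
  obtain t x y where pe: "p = (t,x,y)" by (cases p) auto
  have "t\<^sup>2 \<le> \<bar>t\<bar>" using p pe by (intro sq_le_abs) simp
  then show ?thesis using p pe by (auto simp: sq1_def)
qed

lemma germ_eq_sq1: "germ_eq f g \<Longrightarrow> germ_eq (\<lambda>p. f (sq1 p)) (\<lambda>p. g (sq1 p))"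
proof -
  assume "germ_eq f g"
  then obtain r where r: "r > 0" "\<And>p. p \<in> cube r \<Longrightarrow> f p = g p" unfolding germ_eq_cube by blast
  show ?thesis by (rule germ_eqI[of "min r 1"]) (use r sq1_cube in auto)
qed

lemma analytic_sq1: "analytic_at0 f \<Longrightarrow> analytic_at0 (\<lambda>p. f (sq1 p))"
proof -
  assume "analytic_at0 f"
  from analytic_comp_sq[OF this] show ?thesis
    by (rule analytic_cong[rotated]) (auto simp: sq1_def split: prod.splits)
qed

lemma analytic_tmul: "analytic_at0 f \<Longrightarrow> analytic_at0 (\<lambda>p. fst p * f p)"
  using analytic_mult[OF analytic_fst] by blast

subsection \<open>Ideals\<close>

lemma in_ideal_cong: "germ_eq f g \<Longrightarrow> in_ideal ws f \<Longrightarrow> in_ideal ws g"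
  unfolding in_ideal_def using germ_eq_trans germ_eq_sym by blast

lemma in_ideal_zero: "in_ideal ws (\<lambda>p. 0)"
  unfolding in_ideal_def by (intro exI[of _ "\<lambda>i p. 0"]) (simp add: analytic_const germ_eq_refl)

lemma in_ideal_add:
  assumes "in_ideal ws f" "in_ideal ws g" shows "in_ideal ws (\<lambda>p. f p + g p)"
proof -
  obtain a where a: "\<forall>i<length ws. analytic_at0 (a i)" "germ_eq f (\<lambda>p. \<Sum>i<length ws. a i p * (ws ! i) p)"
    using assms(1) unfolding in_ideal_def by blast
  obtain b where b: "\<forall>i<length ws. analytic_at0 (b i)" "germ_eq g (\<lambda>p. \<Sum>i<length ws. b i p * (ws ! i) p)"
    using assms(2) unfolding in_ideal_def by blast
  show ?thesis unfolding in_ideal_def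
  proof (intro exI[of _ "\<lambda>i p. a i p + b i p"] conjI allI impI)
    show "analytic_at0 (\<lambda>p. a i p + b i p)" if "i < length ws" for i
      using a(1) b(1) that by (simp add: analytic_add)
    have "germ_eq (\<lambda>p. f p + g p) (\<lambda>p. (\<Sum>i<length ws. a i p * (ws ! i) p) + (\<Sum>i<length ws. b i p * (ws ! i) p))"
      by (rule germ_eq_add[OF a(2) b(2)])
    then show "germ_eq (\<lambda>p. f p + g p) (\<lambda>p. \<Sum>i<length ws. (a i p + b i p) * (ws ! i) p)"
      by (simp add: distrib_right sum.distrib)
  qed
qed

lemma in_ideal_mult:
  assumes "analytic_at0 m" "in_ideal ws f" shows "in_ideal ws (\<lambda>p. m p * f p)"
proof -
  obtain a where a: "\<forall>i<length ws. analytic_at0 (a i)" "germ_eq f (\<lambda>p. \<Sum>i<length ws. a i p * (ws ! i) p)"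
    using assms(2) unfolding in_ideal_def by blast
  show ?thesis unfolding in_ideal_def
  proof (intro exI[of _ "\<lambda>i p. m p * a i p"] conjI allI impI)
    show "analytic_at0 (\<lambda>p. m p * a i p)" if "i < length ws" for i
      using a(1) that assms(1) by (simp add: analytic_mult)
    have "germ_eq (\<lambda>p. m p * f p) (\<lambda>p. m p * (\<Sum>i<length ws. a i p * (ws ! i) p))"
      by (rule germ_eq_mult[OF germ_eq_refl a(2)])
    then show "germ_eq (\<lambda>p. m p * f p) (\<lambda>p. \<Sum>i<length ws. m p * a i p * (ws ! i) p)"
      by (simp add: sum_distrib_left mult.assoc)
  qed
qed

lemma in_ideal_gen:
  assumes "i < length ws" "analytic_at0 m" shows "in_ideal ws (\<lambda>p. m p * (ws ! i) p)"
  unfolding in_ideal_def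
proof (intro exI[of _ "\<lambda>j p. if j = i then m p else 0"] conjI allI impI)
  show "analytic_at0 (\<lambda>p. if j = i then m p else 0)" for j
    using assms(2) analytic_const[of 0] by (cases "j = i") simp_all
  have "(\<Sum>j<length ws. (if j = i then m p else 0) * (ws ! j) p) = m p * (ws ! i) p" for p
    using assms(1) by (simp add: if_distrib[of "\<lambda>x. x * _"] cong: if_cong)
  then show "germ_eq (\<lambda>p. m p * (ws ! i) p) (\<lambda>p. \<Sum>j<length ws. (if j = i then m p else 0) * (ws ! j) p)"
    by (simp add: germ_eq_refl)
qed

lemma in_ideal_neg: "in_ideal ws f \<Longrightarrow> in_ideal ws (\<lambda>p. - f p)"
  using in_ideal_mult[OF analytic_const[of "-1"]] by simp

lemma in_ideal_diff: "in_ideal ws f \<Longrightarrow> in_ideal ws g \<Longrightarrow> in_ideal ws (\<lambda>p. f p - g p)"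
  using in_ideal_add[OF _ in_ideal_neg] by simp

lemma in_ideal_at0:
  assumes "in_ideal ws f" "\<forall>i<length ws. (ws ! i) (0,0,0) = 0" shows "f (0,0,0) = 0"
proof -
  obtain a where a: "germ_eq f (\<lambda>p. \<Sum>i<length ws. a i p * (ws ! i) p)"
    using assms(1) unfolding in_ideal_def by blast
  show ?thesis using germ_eq_at0[OF a] assms(2) by simp
qed

subsection \<open>Span modulo an ideal\<close>

definition modspan where
  "modspan ws E f \<longleftrightarrow> (\<exists>u. in_ideal ws (\<lambda>p. f p - (\<Sum>e\<in>E. u e * e p)))"

lemma modspan_ideal: "in_ideal ws f \<Longrightarrow> modspan ws E f"
  unfolding modspan_def by (intro exI[of _ "\<lambda>e. 0"]) simp

lemma modspan_elem: assumes "finite E" "e \<in> E" shows "modspan ws E e"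
  unfolding modspan_def
proof (intro exI[of _ "\<lambda>e'. if e' = e then 1 else 0"])
  have "(\<Sum>e'\<in>E. (if e' = e then 1 else 0) * e' p) = e p" for p
    using assms by (simp add: if_distrib[of "\<lambda>x. x * _"] cong: if_cong)
  then show "in_ideal ws (\<lambda>p. e p - (\<Sum>e'\<in>E. (if e' = e then 1 else 0) * e' p))"
    by (simp add: in_ideal_zero)
qed

lemma modspan_add:
  assumes "modspan ws E f" "modspan ws E g" shows "modspan ws E (\<lambda>p. f p + g p)"
proof -
  obtain u where u: "in_ideal ws (\<lambda>p. f p - (\<Sum>e\<in>E. u e * e p))" using assms(1) modspan_def by blast
  obtain v where v: "in_ideal ws (\<lambda>p. g p - (\<Sum>e\<in>E. v e * e p))" using assms(2) modspan_def by blast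
  have "in_ideal ws (\<lambda>p. (f p + g p) - (\<Sum>e\<in>E. (u e + v e) * e p))"
    using in_ideal_add[OF u v] by (simp add: distrib_right sum.distrib algebra_simps)
  then show ?thesis unfolding modspan_def by (rule exI[of _ "\<lambda>e. u e + v e"])
qed

lemma modspan_scale:
  assumes "modspan ws E f" shows "modspan ws E (\<lambda>p. a * f p)"
proof -
  obtain u where u: "in_ideal ws (\<lambda>p. f p - (\<Sum>e\<in>E. u e * e p))" using assms(1) modspan_def by blast
  have "in_ideal ws (\<lambda>p. a * f p - (\<Sum>e\<in>E. (a * u e) * e p))"
    using in_ideal_mult[OF analytic_const[of a] u] by (simp add: sum_distrib_left algebra_simps)
  then show ?thesis unfolding modspan_def by (rule exI[of _ "\<lambda>e. a * u e"])
qed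

lemma modspan_zero: "modspan ws E (\<lambda>p. 0)"
  by (rule modspan_ideal[OF in_ideal_zero])

lemma modspan_sum:
  assumes "finite F" "\<And>e. e \<in> F \<Longrightarrow> modspan ws E (P e)"
  shows "modspan ws E (\<lambda>p. \<Sum>e\<in>F. u e * P e p)"
  using assms
proof (induction F rule: finite_induct)
  case empty then show ?case by (simp add: modspan_zero)
next
  case (insert x F)
  have "modspan ws E (\<lambda>p. u x * P x p + (\<Sum>e\<in>F. u e * P e p))"
    by (rule modspan_add[OF modspan_scale]) (use insert in auto)
  then show ?case using insert by simp
qed

lemma modspan_cong: "germ_eq f g \<Longrightarrow> modspan ws E f \<Longrightarrow> modspan ws E g"
proof -
  assume fg: "germ_eq f g" and "modspan ws E f"
  then obtain u where u: "in_ideal ws (\<lambda>p. f p - (\<Sum>e\<in>E. u e * e p))" using modspan_def by blast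
  have "germ_eq (\<lambda>p. f p - (\<Sum>e\<in>E. u e * e p)) (\<lambda>p. g p - (\<Sum>e\<in>E. u e * e p))"
    using fg unfolding germ_eq_def by (auto elim: eventually_mono)
  then show ?thesis using in_ideal_cong u unfolding modspan_def by blast
qed

lemma modspan_span: "finite E \<Longrightarrow> (\<And>e. e \<in> F \<Longrightarrow> e \<in> E) \<Longrightarrow> finite F \<Longrightarrow> modspan ws E (\<lambda>p. \<Sum>e\<in>F. u e * e p)"
  by (rule modspan_sum) (auto intro: modspan_elem)

lemma finite_codim_iff: "finite_codim ws \<longleftrightarrow>
   (\<exists>E. finite E \<and> (\<forall>e\<in>E. analytic_at0 e) \<and> (\<forall>h. analytic_at0 h \<longrightarrow> modspan ws E h))"
  unfolding finite_codim_def modspan_def ..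

lemma sum5: "(\<Sum>i<5::nat. f i) = f 0 + f 1 + f 2 + f 3 + (f 4 :: real)"
  by (simp add: eval_nat_numeral)

lemma sum3: "(\<Sum>i<3::nat. f i) = f 0 + f 1 + (f 2 :: real)"
  by (simp add: eval_nat_numeral)

definition mnr where
  "mnr f1 f2 k l = (\<lambda>p. pdiff k f1 p * pdiff l f2 p - pdiff l f1 p * pdiff k f2 p)"

lemma jac2: "jac_minors [f1, f2] = [mnr f1 f2 0 1, mnr f1 f2 0 2, mnr f1 f2 1 2]"
  by (simp add: jac_minors_def mnr_def eval_nat_numeral upt_rec)

definition pb :: "(real \<times> real \<times> real \<Rightarrow> real) \<Rightarrow> real \<times> real \<times> real \<Rightarrow> real" where
  "pb f = (\<lambda>p. f (sq1 p))"

lemma stmt_pb: "(\<lambda>(t, x1, x2). g (t ^ 2, x1, x2)) = pb g"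
  by (auto simp: pb_def sq1_def fun_eq_iff)

lemma stmt_T: "(\<lambda>(t, x1, x2). t) = (\<lambda>p::real\<times>real\<times>real. fst p)"
  by (auto simp: fun_eq_iff)

lemma pdiff1_pb: "pdiff 1 (pb g) p = pdiff 1 g (sq1 p)"
  by (cases p) (simp add: pdiff_def pb_def sq1_def)

lemma pdiff1_pb': "pdiff (Suc 0) (pb g) p = pdiff (Suc 0) g (sq1 p)"
  using pdiff1_pb by simp

lemma pdiff2_pb: "pdiff 2 (pb g) p = pdiff 2 g (sq1 p)"
  by (cases p) (simp add: pdiff_def pb_def sq1_def)

lemma pdiff0_pb:
  assumes "analytic_at0 g"
  shows "germ_eq (pdiff 0 (pb g)) (\<lambda>p. 2 * fst p * pdiff 0 g (sq1 p))"
proof -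
  obtain r c where r: "r > 0"
    "\<And>t x y. (t,x,y) \<in> cube r \<Longrightarrow> ((\<lambda>s. g (s,x,y)) has_real_derivative pdiff 0 g (t,x,y)) (at t)"
    using pdiff0_deriv[OF assms] by metis
  show ?thesis
  proof (rule germ_eqI[of "min r 1"])
    show "min r 1 > 0" using r by simp
    fix p assume p: "p \<in> cube (min r 1)"
    obtain t x y where pe: "p = (t,x,y)" by (cases p) auto
    have sq: "(t\<^sup>2,x,y) \<in> cube r" using sq1_cube[OF p] pe by (simp add: sq1_def)
    have d1: "((\<lambda>s. s\<^sup>2) has_real_derivative 2 * t) (at t)" by (auto intro!: derivative_eq_intros)
    have "((\<lambda>s. g (s\<^sup>2,x,y)) has_real_derivative pdiff 0 g (t\<^sup>2,x,y) * (2 * t)) (at t)"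
      using DERIV_chain2[OF r(2)[OF sq] d1] by simp
    then have "deriv (\<lambda>s. g (s\<^sup>2,x,y)) t = pdiff 0 g (t\<^sup>2,x,y) * (2 * t)" by (rule DERIV_imp_deriv)
    then show "pdiff 0 (pb g) p = 2 * fst p * pdiff 0 g (sq1 p)"
      by (simp add: pe pdiff_def pb_def sq1_def)
  qed
qed

lemma analytic_mnr:
  "analytic_at0 f1 \<Longrightarrow> analytic_at0 f2 \<Longrightarrow> analytic_at0 (mnr f1 f2 1 2)"
  unfolding mnr_def by (intro analytic_minus analytic_mult analytic_pdiff1 analytic_pdiff2)

abbreviation Wl where "Wl g1 g2 \<equiv> [g1, g2] @ jac_minors [g1, g2]"

lemma Wl_simps: "Wl g1 g2 = [g1, g2, mnr g1 g2 0 1, mnr g1 g2 0 2, mnr g1 g2 1 2]"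
  by (simp add: jac2)

lemma transfer:
  assumes g: "analytic_at0 g1" "analytic_at0 g2"
    and w: "in_ideal (Wl g1 g2) w"
  shows "in_ideal (Wl (pb g1) (pb g2)) (\<lambda>p. fst p * w (sq1 p))"
proof -
  let ?M = "mnr g1 g2" and ?M' = "mnr (pb g1) (pb g2)"
  obtain a :: "nat \<Rightarrow> real \<times> real \<times> real \<Rightarrow> real" where a0: "\<forall>i<length (Wl g1 g2). analytic_at0 (a i)"
    "germ_eq w (\<lambda>p. \<Sum>i<length (Wl g1 g2). a i p * (Wl g1 g2 ! i) p)"
    using w unfolding in_ideal_def by blast
  have len: "length (Wl g1 g2) = 5" by (simp add: jac2)
  have a: "germ_eq w (\<lambda>p. a 0 p * g1 p + a 1 p * g2 p + a 2 p * ?M 0 1 p + a 3 p * ?M 0 2 p + a 4 p * ?M 1 2 p)"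
    using a0(2) unfolding len sum5 by (simp add: jac2)
  let ?W' = "Wl (pb g1) (pb g2)"
  have an: "analytic_at0 (a i)" if "i < 5" for i using a0(1) that len by simp
  have l: "0 < length ?W'" "1 < length ?W'" "2 < length ?W'" "3 < length ?W'" "4 < length ?W'"
    by (simp_all add: jac2)
  have n: "?W' ! 0 = pb g1" "?W' ! 1 = pb g2" "?W' ! 2 = ?M' 0 1" "?W' ! 3 = ?M' 0 2" "?W' ! 4 = ?M' 1 2"
    by (simp_all add: jac2)
  have c0: "analytic_at0 (\<lambda>p. fst p * a 0 (sq1 p))" by (intro analytic_tmul analytic_sq1 an) simp
  have c1: "analytic_at0 (\<lambda>p. fst p * a 1 (sq1 p))" by (intro analytic_tmul analytic_sq1 an) simp
  have c2: "analytic_at0 (\<lambda>p. (1/2) * a 2 (sq1 p))" by (intro analytic_scale analytic_sq1 an) simp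
  have c3: "analytic_at0 (\<lambda>p. (1/2) * a 3 (sq1 p))" by (intro analytic_scale analytic_sq1 an) simp
  have c4: "analytic_at0 (\<lambda>p. fst p * a 4 (sq1 p))" by (intro analytic_tmul analytic_sq1 an) simp
  have I0: "in_ideal ?W' (\<lambda>p. (fst p * a 0 (sq1 p)) * pb g1 p)"
    using in_ideal_gen[OF l(1) c0] unfolding n .
  have I1: "in_ideal ?W' (\<lambda>p. (fst p * a 1 (sq1 p)) * pb g2 p)"
    using in_ideal_gen[OF l(2) c1] unfolding n .
  have I2: "in_ideal ?W' (\<lambda>p. ((1/2) * a 2 (sq1 p)) * ?M' 0 1 p)"
    using in_ideal_gen[OF l(3) c2] unfolding n .
  have I3: "in_ideal ?W' (\<lambda>p. ((1/2) * a 3 (sq1 p)) * ?M' 0 2 p)"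
    using in_ideal_gen[OF l(4) c3] unfolding n .
  have I4: "in_ideal ?W' (\<lambda>p. (fst p * a 4 (sq1 p)) * ?M' 1 2 p)"
    using in_ideal_gen[OF l(5) c4] unfolding n .
  have S: "in_ideal ?W' (\<lambda>p. (fst p * a 0 (sq1 p)) * pb g1 p + (fst p * a 1 (sq1 p)) * pb g2 p
      + ((1/2) * a 2 (sq1 p)) * ?M' 0 1 p + ((1/2) * a 3 (sq1 p)) * ?M' 0 2 p + (fst p * a 4 (sq1 p)) * ?M' 1 2 p)"
    by (intro in_ideal_add I0 I1 I2 I3 I4)
  have e1: "\<forall>\<^sub>F p in nhds (0,0,0). w (sq1 p) = a 0 (sq1 p) * g1 (sq1 p) + a 1 (sq1 p) * g2 (sq1 p)
     + a 2 (sq1 p) * ?M 0 1 (sq1 p) + a 3 (sq1 p) * ?M 0 2 (sq1 p) + a 4 (sq1 p) * ?M 1 2 (sq1 p)"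
    using germ_eq_sq1[OF a] unfolding germ_eq_def by simp
  have e2: "\<forall>\<^sub>F p in nhds (0,0,0). pdiff 0 (pb g1) p = 2 * fst p * pdiff 0 g1 (sq1 p)"
    using pdiff0_pb[OF g(1)] unfolding germ_eq_def by simp
  have e3: "\<forall>\<^sub>F p in nhds (0,0,0). pdiff 0 (pb g2) p = 2 * fst p * pdiff 0 g2 (sq1 p)"
    using pdiff0_pb[OF g(2)] unfolding germ_eq_def by simp
  have "germ_eq (\<lambda>p. (fst p * a 0 (sq1 p)) * pb g1 p + (fst p * a 1 (sq1 p)) * pb g2 p
      + ((1/2) * a 2 (sq1 p)) * ?M' 0 1 p + ((1/2) * a 3 (sq1 p)) * ?M' 0 2 p + (fst p * a 4 (sq1 p)) * ?M' 1 2 p)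
      (\<lambda>p. fst p * w (sq1 p))"
    unfolding germ_eq_def
  proof (rule eventually_mono[OF eventually_conj[OF e1 eventually_conj[OF e2 e3]]])
    fix p :: "real \<times> real \<times> real"
    assume h: "w (sq1 p) = a 0 (sq1 p) * g1 (sq1 p) + a 1 (sq1 p) * g2 (sq1 p)
     + a 2 (sq1 p) * ?M 0 1 (sq1 p) + a 3 (sq1 p) * ?M 0 2 (sq1 p) + a 4 (sq1 p) * ?M 1 2 (sq1 p) \<and>
     pdiff 0 (pb g1) p = 2 * fst p * pdiff 0 g1 (sq1 p) \<and> pdiff 0 (pb g2) p = 2 * fst p * pdiff 0 g2 (sq1 p)"
    have h2: "pdiff 0 (pb g1) p = 2 * fst p * pdiff 0 g1 (sq1 p)" and h3: "pdiff 0 (pb g2) p = 2 * fst p * pdiff 0 g2 (sq1 p)"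
      using h by blast+
    have m01: "?M' 0 1 p = 2 * fst p * ?M 0 1 (sq1 p)"
      unfolding mnr_def h2 h3 pdiff1_pb by (simp add: algebra_simps)
    have m02: "?M' 0 2 p = 2 * fst p * ?M 0 2 (sq1 p)"
      unfolding mnr_def h2 h3 pdiff2_pb by (simp add: algebra_simps)
    have m12: "?M' 1 2 p = ?M 1 2 (sq1 p)"
      unfolding mnr_def pdiff1_pb pdiff2_pb by simp
    show "(fst p * a 0 (sq1 p)) * pb g1 p + (fst p * a 1 (sq1 p)) * pb g2 p
      + ((1/2) * a 2 (sq1 p)) * ?M' 0 1 p + ((1/2) * a 3 (sq1 p)) * ?M' 0 2 p + (fst p * a 4 (sq1 p)) * ?M' 1 2 p
      = fst p * w (sq1 p)"
      unfolding m01 m02 m12 using h by (simp add: pb_def algebra_simps)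
  qed
  then show ?thesis by (rule in_ideal_cong[OF _ S])
qed

lemma modspan_transfer:
  assumes g: "analytic_at0 g1" "analytic_at0 g2" and m: "analytic_at0 m"
    and fE: "finite E" and fE': "finite E'"
    and sub: "\<And>e. e \<in> E \<Longrightarrow> (\<lambda>p. m p * (fst p * e (sq1 p))) \<in> E'"
    and f: "modspan (Wl g1 g2) E f"
  shows "modspan (Wl (pb g1) (pb g2)) E' (\<lambda>p. m p * (fst p * f (sq1 p)))"
proof -
  obtain u where u: "in_ideal (Wl g1 g2) (\<lambda>p. f p - (\<Sum>e\<in>E. u e * e p))" using f modspan_def by blast
  have A: "modspan (Wl (pb g1) (pb g2)) E' (\<lambda>p. m p * (fst p * (f (sq1 p) - (\<Sum>e\<in>E. u e * e (sq1 p)))))"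
    using modspan_ideal[OF in_ideal_mult[OF m transfer[OF g u]]] by simp
  have B: "modspan (Wl (pb g1) (pb g2)) E' (\<lambda>p. \<Sum>e\<in>E. u e * (m p * (fst p * e (sq1 p))))"
    by (rule modspan_sum[where P = "\<lambda>e p. m p * (fst p * e (sq1 p))", OF fE])
       (rule modspan_elem[OF fE' sub])
  have C: "modspan (Wl (pb g1) (pb g2)) E' (\<lambda>p. m p * (fst p * (f (sq1 p) - (\<Sum>e\<in>E. u e * e (sq1 p))))
      + (\<Sum>e\<in>E. u e * (m p * (fst p * e (sq1 p)))))"
    by (rule modspan_add[OF A B])
  have s: "(\<Sum>e\<in>E. u e * (m p * (fst p * e (sq1 p)))) = m p * (fst p * (\<Sum>e\<in>E. u e * e (sq1 p)))" for p
    by (simp add: sum_distrib_left mult_ac)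
  have "(\<lambda>p. m p * (fst p * (f (sq1 p) - (\<Sum>e\<in>E. u e * e (sq1 p))))
      + (\<Sum>e\<in>E. u e * (m p * (fst p * e (sq1 p))))) = (\<lambda>p. m p * (fst p * f (sq1 p)))"
    unfolding s by (simp add: fun_eq_iff algebra_simps)
  with C show ?thesis by simp
qed

lemma claimC:
  assumes g: "analytic_at0 g1" "analytic_at0 g2"
    and E: "finite E" "\<And>h. analytic_at0 h \<Longrightarrow> modspan (Wl g1 g2) E h"
    and E': "finite E'" "\<And>e. e \<in> E \<Longrightarrow> (\<lambda>p. 1 * (fst p * e (sq1 p))) \<in> E'"
        "\<And>e. e \<in> E \<Longrightarrow> (\<lambda>p. fst p * (fst p * e (sq1 p))) \<in> E'"
    and k: "analytic_at0 k"
  shows "modspan (Wl (pb g1) (pb g2)) E' (\<lambda>p. fst p * k p)"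
proof -
  obtain fe fo where fe: "analytic_at0 fe" "analytic_at0 fo"
      "germ_eq k (\<lambda>(t,x,y). fe (t\<^sup>2,x,y) + t * fo (t\<^sup>2,x,y))"
    using analytic_eo[OF k] by blast
  have X1: "modspan (Wl (pb g1) (pb g2)) E' (\<lambda>p. 1 * (fst p * fe (sq1 p)))"
    by (rule modspan_transfer[OF g analytic_const E(1) E'(1) E'(2) E(2)[OF fe(1)]])
  have X2: "modspan (Wl (pb g1) (pb g2)) E' (\<lambda>p. fst p * (fst p * fo (sq1 p)))"
    by (rule modspan_transfer[OF g analytic_fst E(1) E'(1) E'(3) E(2)[OF fe(2)]])
  have X: "modspan (Wl (pb g1) (pb g2)) E' (\<lambda>p. 1 * (fst p * fe (sq1 p)) + fst p * (fst p * fo (sq1 p)))"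
    by (rule modspan_add[OF X1 X2])
  have "germ_eq (\<lambda>p. 1 * (fst p * fe (sq1 p)) + fst p * (fst p * fo (sq1 p))) (\<lambda>p. fst p * k p)"
    unfolding germ_eq_def
  proof (rule eventually_mono[OF fe(3)[unfolded germ_eq_def]])
    fix p :: "real \<times> real \<times> real"
    assume "k p = (case p of (t,x,y) \<Rightarrow> fe (t\<^sup>2,x,y) + t * fo (t\<^sup>2,x,y))"
    then have "k p = fe (sq1 p) + fst p * fo (sq1 p)" by (cases p) (simp add: sq1_def)
    then show "1 * (fst p * fe (sq1 p)) + fst p * (fst p * fo (sq1 p)) = fst p * k p"
      by (simp add: algebra_simps)
  qed
  then show ?thesis by (rule modspan_cong[OF _ X])
qed

lemma split_g:
  assumes "analytic_at0 g"
  shows "\<exists>d. analytic_at0 d \<and> germ_eq (\<lambda>p. g p - pb g p) (\<lambda>p. fst p * d p)"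
proof -
  obtain q where q: "analytic_at0 q" "germ_eq g (\<lambda>(t,x,y). g (0,x,y) + t * q (t,x,y))"
    using analytic_split0(2)[OF assms] by blast
  have e1: "\<forall>\<^sub>F p in nhds (0,0,0). g p = g (0, fst (snd p), snd (snd p)) + fst p * q p"
    using q(2) unfolding germ_eq_def by (rule eventually_mono) (auto split: prod.splits)
  have e2: "\<forall>\<^sub>F p in nhds (0,0,0). pb g p = g (0, fst (snd p), snd (snd p)) + (fst p)\<^sup>2 * q (sq1 p)"
    using germ_eq_sq1[OF q(2)] unfolding germ_eq_def
    by (rule eventually_mono) (auto simp: pb_def sq1_def split: prod.splits)
  show ?thesis
  proof (intro exI conjI)
    show "analytic_at0 (\<lambda>p. q p - fst p * q (sq1 p))"
      by (intro analytic_minus q(1) analytic_tmul analytic_sq1)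
    show "germ_eq (\<lambda>p. g p - pb g p) (\<lambda>p. fst p * (q p - fst p * q (sq1 p)))"
      unfolding germ_eq_def
      by (rule eventually_mono[OF eventually_conj[OF e1 e2]]) (simp add: algebra_simps power2_eq_square)
  qed
qed

lemma expand3:
  assumes "in_ideal [T, f1, f2] f"
  shows "\<exists>b0 b1 b2. analytic_at0 b0 \<and> analytic_at0 b1 \<and> analytic_at0 b2 \<and>
     germ_eq f (\<lambda>p. b0 p * T p + b1 p * f1 p + b2 p * f2 p)"
proof -
  obtain a :: "nat \<Rightarrow> real \<times> real \<times> real \<Rightarrow> real" where a0: "\<forall>i<length [T, f1, f2]. analytic_at0 (a i)"
    "germ_eq f (\<lambda>p. \<Sum>i<length [T, f1, f2]. a i p * ([T, f1, f2] ! i) p)"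
    using assms unfolding in_ideal_def by blast
  have len: "length [T, f1, f2] = 3" by simp
  have a: "germ_eq f (\<lambda>p. a 0 p * T p + a 1 p * f1 p + a 2 p * f2 p)"
    using a0(2) unfolding len sum3 by simp
  have an: "analytic_at0 (a i)" if "i < 3" for i using a0(1) that len by simp
  show ?thesis
    by (intro exI[of _ "a 0"] exI[of _ "a 1"] exI[of _ "a 2"] conjI an a) simp_all
qed

lemma decomp:
  assumes g: "analytic_at0 g1" "analytic_at0 g2"
    and h: "modspan [(\<lambda>p. fst p), g1, g2] E0 h"
  shows "\<exists>u b1 b2 K. analytic_at0 b1 \<and> analytic_at0 b2 \<and> analytic_at0 K \<and>
     germ_eq h (\<lambda>p. (\<Sum>e\<in>E0. u e * e p) + b1 p * pb g1 p + b2 p * pb g2 p + fst p * K p)"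
proof -
  obtain u where u: "in_ideal [(\<lambda>p. fst p), g1, g2] (\<lambda>p. h p - (\<Sum>e\<in>E0. u e * e p))"
    using h modspan_def by blast
  obtain b0 b1 b2 where b: "analytic_at0 b0" "analytic_at0 b1" "analytic_at0 b2"
    "germ_eq (\<lambda>p. h p - (\<Sum>e\<in>E0. u e * e p)) (\<lambda>p. b0 p * fst p + b1 p * g1 p + b2 p * g2 p)"
    using expand3[OF u] by auto
  obtain d1 where d1: "analytic_at0 d1" "germ_eq (\<lambda>p. g1 p - pb g1 p) (\<lambda>p. fst p * d1 p)"
    using split_g[OF g(1)] by blast
  obtain d2 where d2: "analytic_at0 d2" "germ_eq (\<lambda>p. g2 p - pb g2 p) (\<lambda>p. fst p * d2 p)"
    using split_g[OF g(2)] by blast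
  let ?K = "\<lambda>p. b0 p + b1 p * d1 p + b2 p * d2 p"
  have aK: "analytic_at0 ?K" by (intro analytic_add analytic_mult b d1(1) d2(1))
  have "germ_eq h (\<lambda>p. (\<Sum>e\<in>E0. u e * e p) + b1 p * pb g1 p + b2 p * pb g2 p + fst p * ?K p)"
    unfolding germ_eq_def
  proof (rule eventually_mono[OF eventually_conj[OF b(4)[unfolded germ_eq_def]
        eventually_conj[OF d1(2)[unfolded germ_eq_def] d2(2)[unfolded germ_eq_def]]]])
    fix p :: "real \<times> real \<times> real"
    assume a: "h p - (\<Sum>e\<in>E0. u e * e p) = b0 p * fst p + b1 p * g1 p + b2 p * g2 p \<and>
        g1 p - pb g1 p = fst p * d1 p \<and> g2 p - pb g2 p = fst p * d2 p"
    then have a1: "h p = (\<Sum>e\<in>E0. u e * e p) + b0 p * fst p + b1 p * g1 p + b2 p * g2 p"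
      and a2: "g1 p = pb g1 p + fst p * d1 p" and a3: "g2 p = pb g2 p + fst p * d2 p"
      by (simp_all add: algebra_simps)
    show "h p = (\<Sum>e\<in>E0. u e * e p) + b1 p * pb g1 p + b2 p * pb g2 p + fst p * ?K p"
      unfolding a1 a2 a3 by (simp add: algebra_simps)
  qed
  then show ?thesis using b aK by blast
qed

lemma W'_gens:
  fixes g1 g2 :: "real \<times> real \<times> real \<Rightarrow> real"
  assumes "analytic_at0 b1" "analytic_at0 b2"
  shows "in_ideal (Wl (pb g1) (pb g2)) (\<lambda>p. b1 p * pb g1 p + b2 p * pb g2 p)"
proof -
  have l: "0 < length (Wl (pb g1) (pb g2))" "1 < length (Wl (pb g1) (pb g2))" by (simp_all add: jac2)
  have n: "Wl (pb g1) (pb g2) ! 0 = pb g1" "Wl (pb g1) (pb g2) ! 1 = pb g2" by simp_all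
  show ?thesis
    using in_ideal_add[OF in_ideal_gen[OF l(1) assms(1)] in_ideal_gen[OF l(2) assms(2)]] unfolding n .
qed

lemma W'_at0:
  assumes g: "analytic_at0 g1" "analytic_at0 g2" "g1 (0,0,0) = 0" "g2 (0,0,0) = 0"
    and M: "mnr g1 g2 1 2 (0,0,0) = 0"
  shows "\<forall>i<length (Wl (pb g1) (pb g2)). (Wl (pb g1) (pb g2) ! i) (0,0,0) = 0"
proof -
  have s0: "sq1 (0,0,0) = (0,0,0)" by (simp add: sq1_def)
  have p1: "pdiff 0 (pb g1) (0,0,0) = 0" using germ_eq_at0[OF pdiff0_pb[OF g(1)]] by simp
  have p2: "pdiff 0 (pb g2) (0,0,0) = 0" using germ_eq_at0[OF pdiff0_pb[OF g(2)]] by simp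
  have "mnr (pb g1) (pb g2) 0 1 (0,0,0) = 0" "mnr (pb g1) (pb g2) 0 2 (0,0,0) = 0"
    by (simp_all add: mnr_def p1 p2)
  moreover have "mnr (pb g1) (pb g2) 1 2 (0,0,0) = 0"
    using M by (simp add: mnr_def pdiff1_pb pdiff1_pb' pdiff2_pb s0)
  moreover have "pb g1 (0,0,0) = 0" "pb g2 (0,0,0) = 0" using g(3,4) by (simp_all add: pb_def s0)
  ultimately have L: "\<forall>w\<in>set (Wl (pb g1) (pb g2)). w (0,0,0) = 0" by (simp add: jac2)
  show ?thesis
  proof (intro allI impI)
    fix i assume "i < length (Wl (pb g1) (pb g2))"
    then have "Wl (pb g1) (pb g2) ! i \<in> set (Wl (pb g1) (pb g2))" by (rule nth_mem)
    then show "(Wl (pb g1) (pb g2) ! i) (0,0,0) = 0" using L by blast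
  qed
qed

lemma M12_zero:
  assumes g: "analytic_at0 g1" "analytic_at0 g2" and pr: "proper_ideal (Wl g1 g2)"
  shows "mnr g1 g2 1 2 (0,0,0) = 0"
proof (rule ccontr)
  assume "mnr g1 g2 1 2 (0,0,0) \<noteq> 0"
  then obtain r where r: "analytic_at0 r" "germ_eq (\<lambda>p. r p * mnr g1 g2 1 2 p) (\<lambda>_. 1)"
    using analytic_recip[OF analytic_mnr[OF g]] by blast
  have l: "4 < length (Wl g1 g2)" by (simp add: jac2)
  have n: "Wl g1 g2 ! 4 = mnr g1 g2 1 2" by (simp add: jac2)
  have "in_ideal (Wl g1 g2) (\<lambda>p. r p * mnr g1 g2 1 2 p)"
    using in_ideal_gen[OF l r(1)] unfolding n .
  then have "in_ideal (Wl g1 g2) (\<lambda>_. 1)" by (rule in_ideal_cong[OF r(2)])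
  then show False using pr unfolding proper_ideal_def by simp
qed

theorem proposition4p4:
  fixes g1 g2 :: "real \<times> real \<times> real \<Rightarrow> real"
  assumes "analytic_at0 g1" and "analytic_at0 g2"
    and "g1 (0, 0, 0) = 0" and "g2 (0, 0, 0) = 0"
    and "curve_ais [g1, g2]"
    and "finite_codim [(\<lambda>(t, x1, x2). t), g1, g2]"
  shows "finite_codim [(\<lambda>(t, x1, x2). t), (\<lambda>(t, x1, x2). g1 (t ^ 2, x1, x2)), (\<lambda>(t, x1, x2). g2 (t ^ 2, x1, x2))]
    \<and> curve_ais [(\<lambda>(t, x1, x2). g1 (t ^ 2, x1, x2)), (\<lambda>(t, x1, x2). g2 (t ^ 2, x1, x2))]"
proof -
  note g = assms(1,2)
  obtain E0 where E0: "finite E0" "\<forall>e\<in>E0. analytic_at0 e"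
      "\<And>h. analytic_at0 h \<Longrightarrow> modspan [(\<lambda>p. fst p), g1, g2] E0 h"
    using assms(6) unfolding finite_codim_iff stmt_T by blast
  have pr: "proper_ideal (Wl g1 g2)" and fc: "finite_codim (Wl g1 g2)"
    using assms(5) unfolding curve_ais_def by auto
  obtain E where E: "finite E" "\<forall>e\<in>E. analytic_at0 e" "\<And>h. analytic_at0 h \<Longrightarrow> modspan (Wl g1 g2) E h"
    using fc unfolding finite_codim_iff by blast
  have part1: "finite_codim [(\<lambda>p. fst p), pb g1, pb g2]"
    unfolding finite_codim_iff
  proof (intro exI[of _ E0] conjI allI impI)
    fix h :: "real \<times> real \<times> real \<Rightarrow> real" assume h: "analytic_at0 h"
    obtain u b1 b2 K where d: "analytic_at0 b1" "analytic_at0 b2" "analytic_at0 K"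
      "germ_eq h (\<lambda>p. (\<Sum>e\<in>E0. u e * e p) + b1 p * pb g1 p + b2 p * pb g2 p + fst p * K p)"
      using decomp[OF g E0(3)[OF h]] by blast
    let ?L = "[(\<lambda>p. fst p), pb g1, pb g2]"
    have "in_ideal ?L (\<lambda>p. K p * fst p + b1 p * pb g1 p + b2 p * pb g2 p)"
      using in_ideal_add[OF in_ideal_add[OF in_ideal_gen[of 0 ?L K] in_ideal_gen[of 1 ?L b1]]
          in_ideal_gen[of 2 ?L b2]] d by simp
    moreover have "germ_eq (\<lambda>p. K p * fst p + b1 p * pb g1 p + b2 p * pb g2 p) (\<lambda>p. h p - (\<Sum>e\<in>E0. u e * e p))"
      using d(4) unfolding germ_eq_def by (rule eventually_mono) (simp add: algebra_simps)
    ultimately have "in_ideal ?L (\<lambda>p. h p - (\<Sum>e\<in>E0. u e * e p))" by (rule in_ideal_cong[rotated])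
    then show "modspan ?L E0 h" unfolding modspan_def by blast
  qed (use E0 in auto)
  define S1 where "S1 = (\<lambda>e p. 1 * (fst p * e (sq1 p))) ` E"
  define S2 where "S2 = (\<lambda>e p. fst p * (fst p * e (sq1 p))) ` E"
  define E' where "E' = E0 \<union> S1 \<union> S2"
  have fE': "finite E'" using E(1) E0(1) by (simp add: E'_def S1_def S2_def)
  have aE': "\<forall>e\<in>E'. analytic_at0 e"
  proof
    fix e assume "e \<in> E'"
    then consider "e \<in> E0" | e' where "e' \<in> E" "e = (\<lambda>p. 1 * (fst p * e' (sq1 p)))"
      | e' where "e' \<in> E" "e = (\<lambda>p. fst p * (fst p * e' (sq1 p)))"
      unfolding E'_def S1_def S2_def by blast
    then show "analytic_at0 e"
    proof cases
      case 1 then show ?thesis using E0(2) by blast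
    next
      case (2 e') then show ?thesis using E(2) by (simp add: analytic_tmul analytic_sq1)
    next
      case (3 e') then show ?thesis using E(2) by (simp add: analytic_tmul analytic_sq1)
    qed
  qed
  have part2: "finite_codim (Wl (pb g1) (pb g2))"
    unfolding finite_codim_iff
  proof (intro exI[of _ E'] conjI allI impI)
    fix h :: "real \<times> real \<times> real \<Rightarrow> real" assume h: "analytic_at0 h"
    obtain u b1 b2 K where d: "analytic_at0 b1" "analytic_at0 b2" "analytic_at0 K"
      "germ_eq h (\<lambda>p. (\<Sum>e\<in>E0. u e * e p) + b1 p * pb g1 p + b2 p * pb g2 p + fst p * K p)"
      using decomp[OF g E0(3)[OF h]] by blast
    have A: "modspan (Wl (pb g1) (pb g2)) E' (\<lambda>p. \<Sum>e\<in>E0. u e * e p)"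
      by (rule modspan_span[OF fE' _ E0(1)]) (simp add: E'_def)
    have B: "modspan (Wl (pb g1) (pb g2)) E' (\<lambda>p. b1 p * pb g1 p + b2 p * pb g2 p)"
      by (rule modspan_ideal[OF W'_gens[OF d(1,2)]])
    have C: "modspan (Wl (pb g1) (pb g2)) E' (\<lambda>p. fst p * K p)"
      by (rule claimC[OF g E(1) E(3) fE' _ _ d(3)]) (auto simp: E'_def S1_def S2_def)
    have "modspan (Wl (pb g1) (pb g2)) E' (\<lambda>p. (\<Sum>e\<in>E0. u e * e p) + (b1 p * pb g1 p + b2 p * pb g2 p) + fst p * K p)"
      by (rule modspan_add[OF modspan_add[OF A B] C])
    moreover have "germ_eq (\<lambda>p. (\<Sum>e\<in>E0. u e * e p) + (b1 p * pb g1 p + b2 p * pb g2 p) + fst p * K p) h"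
      using germ_eq_sym[OF d(4)] by (simp add: add.assoc)
    ultimately show "modspan (Wl (pb g1) (pb g2)) E' h" by (rule modspan_cong[rotated])
  qed (use fE' aE' in auto)
  have part3: "proper_ideal (Wl (pb g1) (pb g2))"
    unfolding proper_ideal_def
  proof
    assume "in_ideal (Wl (pb g1) (pb g2)) (\<lambda>_. 1)"
    from in_ideal_at0[OF this W'_at0[OF g assms(3,4) M12_zero[OF g pr]]] show False by simp
  qed
  show ?thesis unfolding stmt_pb stmt_T curve_ais_def using part1 part2 part3 by simp
qed


end
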